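(* (i) For every $\alpha\in(0,1]$, $\mathrm{ES}_\alpha$ (as a map $L^\infty\to\overline{\mathbb{R}}$) is quasi-convex, law invariant and satisfies $\mathrm{ES}_\alpha\ge\mathrm{VaR}_\alpha$ on $L^\infty$, and every quasi-convex, law-invariant $\rho:L^\infty\to\overline{\mathbb{R}}$ with $\rho(X)\ge\mathrm{VaR}_\alpha(X)$ for all $X\in L^\infty$ satisfies $\rho\ge\mathrm{ES}_\alpha$ on $L^\infty$; i.e. $$\mathrm{ES}_\alpha=\min\{\rho:L^\infty\to\overline{\mathbb{R}}\mid \rho\ge\mathrm{VaR}_\alpha \text{ and } \rho \text{ is quasi-convex and law invariant}\}.$$ (ii) For every $\alpha\in[0,1)$, $$\mathrm{ES}_\alpha=\min\{\rho:L^\infty\to\overline{\mathbb{R}}\mid \rho\ge\mathrm{VaR}^+_\alpha \text{ and } \rho \text{ is quasi-convex and law invariant}\},$$ in the same sense.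
   Context: $(\Omega,\mathcal F,\mathbb P)$ is an atomless probability space, $L^0$ the set of all random variables, $L^\infty$ the essentially bounded ones, $\overline{\mathbb{R}}=[-\infty,\infty]$. For $\alpha\in[0,1]$ and $X\in L^0$: $\mathrm{VaR}_\alpha(X)=\inf\{x\in\mathbb{R}:\mathbb P(X\le x)\ge\alpha\}$, $\mathrm{VaR}^+_\alpha(X)=\inf\{x\in\mathbb{R}:\mathbb P(X\le x)>\alpha\}$ (with $\inf\mathbb{R}=-\infty$, $\inf\emptyset=\infty$; $\mathrm{VaR}_1$ is the essential supremum and $\mathrm{VaR}^+_0$ the essential infimum). For $X\in L^\infty$: $\mathrm{ES}_\alpha(X)=\frac{1}{1-\alpha}\int_\alpha^1\mathrm{VaR}_\beta(X)\,\mathrm d\beta$ for $\alpha\in[0,1)$ and $\mathrm{ES}_1(X)=\mathrm{VaR}_1(X)$. A map $\rho:L^\infty\to\overline{\mathbb{R}}$ is quasi-convex if $\rho(\gamma X+(1-\gamma)Y)\le\max\{\rho(X),\rho(Y)\}$ for all $X,Y\in L^\infty$, $\gamma\in[0,1]$, and law invariant if $\rho(X)=\rho(Y)$ whenever $X,Y$ have the same distribution. $\rho\ge\widetilde\rho$ means $\rho(X)\ge\widetilde\rho(X)$ for all $X$ in the common domain; "min" of a set of maps means an element of the set that is pointwise $\le$ every element. *)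

theory Defs
  imports "HOL-Probability.Probability"
begin

definition atomless :: "'a measure \<Rightarrow> bool" where
  "atomless M \<longleftrightarrow> (\<forall>A\<in>sets M. 0 < measure M A \<longrightarrow>
      (\<exists>B\<in>sets M. B \<subseteq> A \<and> 0 < measure M B \<and> measure M B < measure M A))"

definition Linf :: "'a measure \<Rightarrow> ('a \<Rightarrow> real) set" where
  "Linf M = {X. X \<in> borel_measurable M \<and> (\<exists>C. AE \<omega> in M. \<bar>X \<omega>\<bar> \<le> C)}"

definition VaR :: "'a measure \<Rightarrow> real \<Rightarrow> ('a \<Rightarrow> real) \<Rightarrow> ereal" where
  "VaR M \<alpha> X = Inf (ereal ` {x::real. measure M {\<omega>\<in>space M. X \<omega> \<le> x} \<ge> \<alpha>})"

definition VaR_plus :: "'a measure \<Rightarrow> real \<Rightarrow> ('a \<Rightarrow> real) \<Rightarrow> ereal" where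
  "VaR_plus M \<alpha> X = Inf (ereal ` {x::real. measure M {\<omega>\<in>space M. X \<omega> \<le> x} > \<alpha>})"

text \<open>For X in L-infinity, VaR at beta is finite for beta in (0,1]; the single point
  beta = 0 (where VaR is -infinity) is a null set for the integral.\<close>
definition ES :: "'a measure \<Rightarrow> real \<Rightarrow> ('a \<Rightarrow> real) \<Rightarrow> ereal" where
  "ES M \<alpha> X = (if \<alpha> < 1
     then ereal (1 / (1 - \<alpha>) * (LBINT \<beta>=ereal \<alpha>..ereal 1. real_of_ereal (VaR M \<beta> X)))
     else VaR M 1 X)"

definition quasi_convex :: "'a measure \<Rightarrow> (('a \<Rightarrow> real) \<Rightarrow> ereal) \<Rightarrow> bool" where
  "quasi_convex M \<rho> \<longleftrightarrow> (\<forall>X\<in>Linf M. \<forall>Y\<in>Linf M. \<forall>\<gamma>::real. 0 \<le> \<gamma> \<and> \<gamma> \<le> 1 \<longrightarrow>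
      \<rho> (\<lambda>\<omega>. \<gamma> * X \<omega> + (1 - \<gamma>) * Y \<omega>) \<le> max (\<rho> X) (\<rho> Y))"

definition law_invariant :: "'a measure \<Rightarrow> (('a \<Rightarrow> real) \<Rightarrow> ereal) \<Rightarrow> bool" where
  "law_invariant M \<rho> \<longleftrightarrow> (\<forall>X\<in>Linf M. \<forall>Y\<in>Linf M.
      distr M borel X = distr M borel Y \<longrightarrow> \<rho> X = \<rho> Y)"

end

theory Submission
  imports Defs
begin

locale atl_prob = prob_space M for M :: "'a measure" +
  assumes atl: "atomless M"
begin

lemma small_pow:
  assumes A: "A \<in> sets M" "0 < measure M A"
  shows "\<exists>B\<in>sets M. B \<subseteq> A \<and> 0 < measure M B \<and> measure M B \<le> measure M A / 2 ^ k"
proof (induction k)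
  case 0 then show ?case using A by auto
next
  case (Suc k)
  then obtain B where B: "B \<in> sets M" "B \<subseteq> A" "0 < measure M B" "measure M B \<le> measure M A / 2 ^ k"
    by blast
  then obtain B' where B': "B' \<in> sets M" "B' \<subseteq> B" "0 < measure M B'" "measure M B' < measure M B"
    using atl unfolding atomless_def by blast
  have d: "measure M (B - B') = measure M B - measure M B'"
    using B B' by (intro finite_measure_Diff) auto
  have h: "measure M B / 2 \<le> measure M A / 2 ^ Suc k"
    using B(4) by (simp add: field_simps)
  show ?case
  proof (cases "measure M B' \<le> measure M B / 2")
    case True
    then show ?thesis using B B' h by (intro bexI[of _ B']) auto
  next
    case False
    then show ?thesis using B B' d h by (intro bexI[of _ "B - B'"]) auto
  qed
qed

lemma small:
  assumes A: "A \<in> sets M" "0 < measure M A" and e: "0 < e"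
  shows "\<exists>B\<in>sets M. B \<subseteq> A \<and> 0 < measure M B \<and> measure M B < e"
proof -
  obtain k where k: "(1/2::real) ^ k < e" using real_arch_pow_inv[OF e, of "1/2"] by auto
  obtain B where B: "B \<in> sets M" "B \<subseteq> A" "0 < measure M B" "measure M B \<le> measure M A / 2 ^ k"
    using small_pow[OF A] by blast
  have "measure M A / 2 ^ k \<le> 1 / 2 ^ k"
    using prob_le_1[of A] by (intro divide_right_mono) auto
  then show ?thesis using B k by (intro bexI[of _ B]) (auto simp: power_one_over)
qed

definition sdef :: "'a set \<Rightarrow> real \<Rightarrow> 'a set \<Rightarrow> real" where
  "sdef A c D = Sup {measure M C | C. C \<in> sets M \<and> C \<subseteq> A - D \<and> measure M D + measure M C \<le> c}"

definition nxt :: "'a set \<Rightarrow> real \<Rightarrow> 'a set \<Rightarrow> 'a set" where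
  "nxt A c D = (SOME C. C \<in> sets M \<and> C \<subseteq> A - D \<and> measure M D + measure M C \<le> c \<and> sdef A c D / 2 \<le> measure M C)"

lemma sdef_upper:
  assumes "C \<in> sets M" "C \<subseteq> A - D" "measure M D + measure M C \<le> c"
  shows "measure M C \<le> sdef A c D"
  unfolding sdef_def
  by (rule cSup_upper) (use assms prob_le_1 in \<open>auto intro!: bdd_aboveI[of _ 1]\<close>)

lemma nxt_ex:
  assumes "D \<in> sets M" "measure M D \<le> c"
  shows "\<exists>C. C \<in> sets M \<and> C \<subseteq> A - D \<and> measure M D + measure M C \<le> c \<and> sdef A c D / 2 \<le> measure M C"
proof (cases "sdef A c D \<le> 0")
  case True then show ?thesis using assms by (intro exI[of _ "{}"]) auto
next
  case False
  let ?S = "{measure M C | C. C \<in> sets M \<and> C \<subseteq> A - D \<and> measure M D + measure M C \<le> c}"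
  have ne: "?S \<noteq> {}" using assms by (auto intro!: exI[of _ "{}"])
  have bdd: "bdd_above ?S" using prob_le_1 by (auto intro!: bdd_aboveI[of _ 1])
  have "sdef A c D / 2 < sdef A c D" using False by auto
  then have "\<exists>x\<in>?S. sdef A c D / 2 < x" unfolding sdef_def
    using less_cSup_iff[OF ne bdd] by (simp add: sdef_def)
  then show ?thesis by (auto intro: less_imp_le)
qed

lemma nxt_prop:
  assumes "D \<in> sets M" "measure M D \<le> c"
  shows "nxt A c D \<in> sets M" "nxt A c D \<subseteq> A - D" "measure M D + measure M (nxt A c D) \<le> c"
    "sdef A c D / 2 \<le> measure M (nxt A c D)"
  using someI_ex[OF nxt_ex[OF assms, of A]] unfolding nxt_def by blast+

primrec seqB :: "'a set \<Rightarrow> real \<Rightarrow> nat \<Rightarrow> 'a set" where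
  "seqB A c 0 = {}"
| "seqB A c (Suc n) = seqB A c n \<union> nxt A c (seqB A c n)"

lemma seqB_prop:
  assumes "0 \<le> c"
  shows "seqB A c n \<in> sets M \<and> seqB A c n \<subseteq> A \<and> measure M (seqB A c n) \<le> c"
proof (induction n)
  case 0 then show ?case using assms by simp
next
  case (Suc n)
  then have D: "seqB A c n \<in> sets M" "seqB A c n \<subseteq> A" "measure M (seqB A c n) \<le> c" by auto
  note N = nxt_prop[OF D(1,3), of A]
  have "measure M (seqB A c (Suc n)) = measure M (seqB A c n) + measure M (nxt A c (seqB A c n))"
    using D N by (simp, intro finite_measure_Union) auto
  then show ?case using D N by auto
qed

lemma sierpinski:
  assumes A: "A \<in> sets M" and c: "0 \<le> c" "c \<le> measure M A"
  shows "\<exists>B\<in>sets M. B \<subseteq> A \<and> measure M B = c"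
proof -
  let ?B = "seqB A c"
  note P = seqB_prop[OF c(1)]
  have Bsets: "range ?B \<subseteq> sets M" using P by auto
  have inc: "incseq ?B" by (rule incseq_SucI) auto
  have lim: "(\<lambda>n. measure M (?B n)) \<longlonglongrightarrow> measure M (\<Union>n. ?B n)"
    by (rule finite_Lim_measure_incseq[OF Bsets inc])
  have U: "(\<Union>n. ?B n) \<in> sets M" "(\<Union>n. ?B n) \<subseteq> A" using P by auto
  have le: "measure M (\<Union>n. ?B n) \<le> c"
    by (rule LIMSEQ_le_const2[OF lim]) (use P in auto)
  have "measure M (\<Union>n. ?B n) = c"
  proof (rule ccontr)
    assume "measure M (\<Union>n. ?B n) \<noteq> c"
    then have lt: "measure M (\<Union>n. ?B n) < c" using le by auto
    have dA: "measure M (A - (\<Union>n. ?B n)) = measure M A - measure M (\<Union>n. ?B n)"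
      using U A by (intro finite_measure_Diff) auto
    then have "0 < measure M (A - (\<Union>n. ?B n))" using lt c by auto
    then obtain C where C: "C \<in> sets M" "C \<subseteq> A - (\<Union>n. ?B n)" "0 < measure M C"
      "measure M C < c - measure M (\<Union>n. ?B n)"
      using small[of "A - (\<Union>n. ?B n)" "c - measure M (\<Union>n. ?B n)"] U A lt by auto
    have step: "measure M (?B n) + measure M C / 2 \<le> measure M (?B (Suc n))" for n
    proof -
      have D: "?B n \<in> sets M" "?B n \<subseteq> A" "measure M (?B n) \<le> c" using P by auto
      note N = nxt_prop[OF D(1,3), of A]
      have "measure M (?B n) \<le> measure M (\<Union>n. ?B n)"
        using U by (intro finite_measure_mono) auto
      then have "measure M C \<le> sdef A c (?B n)"
        using C by (intro sdef_upper) auto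
      moreover have "measure M (?B (Suc n)) = measure M (?B n) + measure M (nxt A c (?B n))"
        using D N by (simp, intro finite_measure_Union) auto
      ultimately show ?thesis using N by auto
    qed
    have grow: "real n * (measure M C / 2) \<le> measure M (?B n)" for n
    proof (induction n)
      case (Suc n) then show ?case using step[of n] by (auto simp: algebra_simps)
    qed simp
    obtain n where n: "2 / measure M C < real n" using reals_Archimedean2 by blast
    then have "1 < real n * (measure M C / 2)" using C(3) by (auto simp: field_simps)
    then show False using grow[of n] prob_le_1[of "?B n"] by auto
  qed
  then show ?thesis using U by blast
qed

end

definition Lam :: "real measure" where "Lam = restrict_space lborel {0<..<1}"

lemma space_Lam: "space Lam = {0<..<1}"
  by (simp add: Lam_def space_restrict_space)

lemma sets_Lam: "sets Lam = sets (restrict_space borel {0<..<1::real})"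
  by (simp add: Lam_def sets_restrict_space)

lemma prob_space_Lam: "prob_space Lam"
  by (auto simp add: Lam_def emeasure_restrict_space space_restrict_space intro!: prob_spaceI)

definition cdfX :: "'a measure \<Rightarrow> ('a \<Rightarrow> real) \<Rightarrow> real \<Rightarrow> real" where
  "cdfX M X x = measure M {\<omega>\<in>space M. X \<omega> \<le> x}"

definition Q :: "'a measure \<Rightarrow> ('a \<Rightarrow> real) \<Rightarrow> real \<Rightarrow> real" where
  "Q M X \<beta> = (if 0 < \<beta> \<and> \<beta> < 1 then Inf {x. \<beta> \<le> cdfX M X x} else 0)"

lemma LinfD:
  assumes "X \<in> Linf M"
  obtains C where "X \<in> borel_measurable M" "0 \<le> C" "AE \<omega> in M. \<bar>X \<omega>\<bar> \<le> C"
proof -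
  from assms obtain C where m: "X \<in> borel_measurable M" and ae: "AE \<omega> in M. \<bar>X \<omega>\<bar> \<le> C"
    by (auto simp: Linf_def)
  from ae have "AE \<omega> in M. \<bar>X \<omega>\<bar> \<le> max C 0" by (rule AE_mp) auto
  then show ?thesis using that[OF m, of "max C 0"] by auto
qed

lemma cdfX_eq_cdf:
  assumes "X \<in> borel_measurable M"
  shows "cdfX M X = cdf (distr M borel X)"
proof
  fix x
  show "cdfX M X x = cdf (distr M borel X) x"
    using assms by (simp add: cdf_def cdfX_def measure_distr vimage_def Int_def conj_commute)
qed

lemma cdf_distribution_distr:
  assumes "prob_space M" "X \<in> borel_measurable M"
  shows "cdf_distribution (distr M borel X)"
  unfolding cdf_distribution_def
  using prob_space.real_distribution_distr[OF assms(1)] assms(2) by auto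

lemma Q_pseudo:
  assumes "prob_space M" "X \<in> borel_measurable M" "0 < \<beta>" "\<beta> < 1"
  shows "\<beta> \<le> cdfX M X x \<longleftrightarrow> Q M X \<beta> \<le> x"
proof -
  interpret N: cdf_distribution "distr M borel X"
    using cdf_distribution_distr[OF assms(1,2)] .
  show ?thesis
    using N.pseudoinverse[OF assms(3,4), of x] assms(3,4)
    by (simp add: Q_def cdfX_eq_cdf[OF assms(2)])
qed

lemma Inf_ereal_atLeast: "Inf (ereal ` {x. c \<le> x}) = ereal c"
proof (rule antisym)
  show "Inf (ereal ` {x. c \<le> x}) \<le> ereal c" by (rule Inf_lower) auto
  show "ereal c \<le> Inf (ereal ` {x. c \<le> x})" by (rule Inf_greatest) auto
qed

lemma VaR_eq_Q:
  assumes "prob_space M" "X \<in> borel_measurable M" "0 < \<beta>" "\<beta> < 1"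
  shows "VaR M \<beta> X = ereal (Q M X \<beta>)"
proof -
  have "{x. \<beta> \<le> measure M {\<omega> \<in> space M. X \<omega> \<le> x}} = {x. Q M X \<beta> \<le> x}"
    using Q_pseudo[OF assms] by (auto simp: cdfX_def)
  then show ?thesis by (simp add: VaR_def Inf_ereal_atLeast)
qed

lemma Q_measurable:
  assumes "prob_space M" "X \<in> borel_measurable M"
  shows "Q M X \<in> borel_measurable borel"
proof -
  interpret N: cdf_distribution "distr M borel X"
    using cdf_distribution_distr[OF assms(1,2)] .
  have "(\<lambda>\<beta>. if \<beta> \<in> {0<..<1} then Inf {x. \<beta> \<le> cdf (distr M borel X) x} else 0) \<in> borel_measurable borel"
    using N.measurable_CI by (subst (asm) measurable_restrict_space_iff) auto
  moreover have "Q M X = (\<lambda>\<beta>. if \<beta> \<in> {0<..<1} then Inf {x. \<beta> \<le> cdf (distr M borel X) x} else 0)"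
    by (auto simp: Q_def cdfX_eq_cdf[OF assms(2)] fun_eq_iff)
  ultimately show ?thesis by simp
qed

lemma distr_Q:
  assumes "prob_space M" "X \<in> borel_measurable M"
  shows "distr Lam borel (Q M X) = distr M borel X"
proof -
  interpret N: cdf_distribution "distr M borel X"
    using cdf_distribution_distr[OF assms(1,2)] .
  have "distr Lam borel (Q M X) = distr Lam borel (\<lambda>\<omega>. Inf {x. \<omega> \<le> cdf (distr M borel X) x})"
    by (rule distr_cong) (auto simp: space_Lam Q_def cdfX_eq_cdf[OF assms(2)])
  also have "\<dots> = distr M borel X"
    using N.distr_I_eq_M by (simp add: Lam_def)
  finally show ?thesis .
qed

lemma cdfX_mono:
  assumes "prob_space M" "X \<in> borel_measurable M" "x \<le> y"
  shows "cdfX M X x \<le> cdfX M X y"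
  unfolding cdfX_def using assms
  by (intro finite_measure.finite_measure_mono prob_space.finite_measure) auto

lemma cdfX_upper:
  assumes "prob_space M" "X \<in> borel_measurable M" "AE \<omega> in M. \<bar>X \<omega>\<bar> \<le> C" "C \<le> x"
  shows "cdfX M X x = 1"
proof -
  have "AE \<omega> in M. X \<omega> \<le> x" using assms(3) by (rule AE_mp) (use assms(4) in auto)
  then show ?thesis unfolding cdfX_def using assms(1,2)
    by (subst prob_space.prob_Collect_eq_1) auto
qed

lemma cdfX_lower:
  assumes "prob_space M" "X \<in> borel_measurable M" "AE \<omega> in M. \<bar>X \<omega>\<bar> \<le> C" "x < - C"
  shows "cdfX M X x = 0"
proof -
  have "AE \<omega> in M. \<not> X \<omega> \<le> x" using assms(3) by (rule AE_mp) (use assms(4) in auto)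
  then show ?thesis unfolding cdfX_def using assms(1,2)
    by (subst prob_space.prob_Collect_eq_0) auto
qed

lemma Q_bound:
  assumes "prob_space M" "X \<in> borel_measurable M" "AE \<omega> in M. \<bar>X \<omega>\<bar> \<le> C" "0 \<le> C"
  shows "\<bar>Q M X \<beta>\<bar> \<le> C"
proof (cases "0 < \<beta> \<and> \<beta> < 1")
  case True
  then have b: "0 < \<beta>" "\<beta> < 1" by auto
  have "Q M X \<beta> \<le> C"
    using Q_pseudo[OF assms(1,2) b, of C] cdfX_upper[OF assms(1,2,3), of C] b by simp
  moreover have "- C \<le> Q M X \<beta>"
  proof (rule ccontr)
    assume "\<not> - C \<le> Q M X \<beta>"
    then have "cdfX M X (Q M X \<beta>) = 0" by (intro cdfX_lower[OF assms(1,2,3)]) auto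
    moreover have "\<beta> \<le> cdfX M X (Q M X \<beta>)" using Q_pseudo[OF assms(1,2) b] by simp
    ultimately show False using b by simp
  qed
  ultimately show ?thesis by auto
qed (use assms(4) in \<open>auto simp: Q_def\<close>)

lemma Q_mono:
  assumes "prob_space M" "X \<in> borel_measurable M" "0 < \<beta>" "\<beta> \<le> \<beta>'" "\<beta>' < 1"
  shows "Q M X \<beta> \<le> Q M X \<beta>'"
proof -
  have "\<beta>' \<le> cdfX M X (Q M X \<beta>')" using Q_pseudo[OF assms(1,2), of \<beta>'] assms by simp
  then have "\<beta> \<le> cdfX M X (Q M X \<beta>')" using assms by simp
  then show ?thesis using Q_pseudo[OF assms(1,2), of \<beta>] assms by simp
qed

context atl_prob
begin

definition half :: "'a set \<Rightarrow> 'a set" where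
  "half A = (SOME B. B \<in> sets M \<and> B \<subseteq> A \<and> measure M B = measure M A / 2)"

lemma half_prop:
  assumes "A \<in> sets M"
  shows "half A \<in> sets M" "half A \<subseteq> A" "measure M (half A) = measure M A / 2"
proof -
  have "\<exists>B. B \<in> sets M \<and> B \<subseteq> A \<and> measure M B = measure M A / 2"
    using sierpinski[OF assms, of "measure M A / 2"] by auto
  from someI_ex[OF this] show "half A \<in> sets M" "half A \<subseteq> A" "measure M (half A) = measure M A / 2"
    unfolding half_def by blast+
qed

primrec cc :: "nat \<Rightarrow> 'a \<Rightarrow> nat" where
  "cc 0 \<omega> = 0"
| "cc (Suc m) \<omega> = 2 * cc m \<omega> + (if \<omega> \<in> half {\<omega>'\<in>space M. cc m \<omega>' = cc m \<omega>} then 0 else 1)"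

definition cell :: "nat \<Rightarrow> nat \<Rightarrow> 'a set" where
  "cell m k = {\<omega>\<in>space M. cc m \<omega> = k}"

lemma cc_bound: "cc m \<omega> < 2 ^ m"
  by (induction m) auto

lemma parity_facts: "(2 * (a::nat) = Suc (2 * b)) = False" "(Suc (2 * a) = 2 * b) = False"
  by presburger+

lemma cell_Suc_even: "cell (Suc m) (2 * j) = half (cell m j)" if "cell m j \<in> sets M"
proof -
  have hs: "half (cell m j) \<subseteq> cell m j" using half_prop[OF that] by simp
  show ?thesis
  proof (intro equalityI subsetI)
    fix \<omega> assume "\<omega> \<in> cell (Suc m) (2 * j)"
    then have "\<omega> \<in> space M" "2 * cc m \<omega> + (if \<omega> \<in> half (cell m (cc m \<omega>)) then 0 else 1) = 2 * j"
      by (auto simp: cell_def)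
    then show "\<omega> \<in> half (cell m j)" by (auto split: if_splits simp: parity_facts)
  next
    fix \<omega> assume h: "\<omega> \<in> half (cell m j)"
    then have "\<omega> \<in> cell m j" using hs by auto
    then have "cc m \<omega> = j" "\<omega> \<in> space M" by (auto simp: cell_def)
    then show "\<omega> \<in> cell (Suc m) (2 * j)" using h by (auto simp: cell_def)
  qed
qed

lemma cell_Suc_odd: "cell (Suc m) (2 * j + 1) = cell m j - half (cell m j)" if "cell m j \<in> sets M"
proof (intro equalityI subsetI)
  fix \<omega> assume "\<omega> \<in> cell (Suc m) (2 * j + 1)"
  then have "\<omega> \<in> space M" "2 * cc m \<omega> + (if \<omega> \<in> half (cell m (cc m \<omega>)) then 0 else 1) = 2 * j + 1"
    by (auto simp: cell_def)
  then show "\<omega> \<in> cell m j - half (cell m j)" by (auto simp: cell_def parity_facts split: if_splits)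
next
  fix \<omega> assume h: "\<omega> \<in> cell m j - half (cell m j)"
  then have "cc m \<omega> = j" "\<omega> \<in> space M" by (auto simp: cell_def)
  then show "\<omega> \<in> cell (Suc m) (2 * j + 1)" using h by (auto simp: cell_def)
qed

lemma cell_prop: "cell m k \<in> sets M \<and> measure M (cell m k) = (if k < 2 ^ m then 1 / 2 ^ m else 0)"
proof (induction m arbitrary: k)
  case 0
  show ?case by (auto simp: cell_def prob_space)
next
  case (Suc m)
  obtain j where "k = 2 * j \<or> k = 2 * j + 1" by (metis oddE evenE)
  then show ?case
  proof
    assume k: "k = 2 * j"
    have s: "cell m j \<in> sets M" using Suc.IH by blast
    show ?case using half_prop[OF s] Suc.IH[of j] unfolding k cell_Suc_even[OF s] by auto
  next
    assume k: "k = 2 * j + 1"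
    have s: "cell m j \<in> sets M" using Suc.IH by blast
    have d: "measure M (cell m j - half (cell m j)) = measure M (cell m j) - measure M (half (cell m j))"
      using half_prop[OF s] s by (intro finite_measure_Diff) auto
    show ?case using half_prop[OF s] Suc.IH[of j] d s unfolding k cell_Suc_odd[OF s] by auto
  qed
qed

lemma cell_sets: "cell m k \<in> sets M" using cell_prop by blast

lemma measure_cc_less:
  assumes "j \<le> 2 ^ m"
  shows "measure M {\<omega>\<in>space M. cc m \<omega> < j} = real j / 2 ^ m"
  using assms
proof (induction j)
  case 0 then show ?case by simp
next
  case (Suc j)
  have eq: "{\<omega>\<in>space M. cc m \<omega> < Suc j} = {\<omega>\<in>space M. cc m \<omega> < j} \<union> cell m j"
    by (auto simp: cell_def)
  have s: "{\<omega>\<in>space M. cc m \<omega> < j} \<in> sets M"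
  proof -
    have "{\<omega>\<in>space M. cc m \<omega> < j} = (\<Union>k<j. cell m k)" by (auto simp: cell_def)
    then show ?thesis using cell_sets by auto
  qed
  have "measure M {\<omega>\<in>space M. cc m \<omega> < Suc j} = measure M {\<omega>\<in>space M. cc m \<omega> < j} + measure M (cell m j)"
    unfolding eq using s cell_sets by (intro finite_measure_Union) (auto simp: cell_def)
  then show ?case using Suc cell_prop[of m j] by (auto simp: field_simps)
qed

lemma cc_measurable: "cc m \<in> measurable M (count_space UNIV)"
proof (subst measurable_count_space_eq2_countable, intro conjI ballI)
  fix a
  have "cc m -` {a} \<inter> space M = cell m a" by (auto simp: cell_def)
  then show "cc m -` {a} \<inter> space M \<in> sets M" using cell_sets by simp
qed auto

definition low :: "nat \<Rightarrow> 'a \<Rightarrow> real" where "low m \<omega> = real (cc m \<omega>) / 2 ^ m"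
definition upp :: "nat \<Rightarrow> 'a \<Rightarrow> real" where "upp m \<omega> = (real (cc m \<omega>) + 1) / 2 ^ m"
definition V :: "'a \<Rightarrow> real" where "V \<omega> = (SUP m. low m \<omega>)"

lemma low_mono: "incseq (\<lambda>m. low m \<omega>)"
proof (rule incseq_SucI)
  fix m
  have "2 * real (cc m \<omega>) \<le> real (cc (Suc m) \<omega>)" by simp
  then show "low m \<omega> \<le> low (Suc m) \<omega>" by (simp add: low_def field_simps)
qed

lemma upp_mono: "decseq (\<lambda>m. upp m \<omega>)"
proof (rule decseq_SucI)
  fix m
  have "real (cc (Suc m) \<omega>) + 1 \<le> 2 * (real (cc m \<omega>) + 1)" by simp
  then show "upp (Suc m) \<omega> \<le> upp m \<omega>" by (simp add: upp_def field_simps)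
qed

lemma low_le_upp: "low m \<omega> \<le> upp m' \<omega>"
proof -
  have "low m \<omega> \<le> low (max m m') \<omega>" using low_mono[of \<omega>] by (auto simp: incseq_def)
  also have "\<dots> \<le> upp (max m m') \<omega>" by (simp add: low_def upp_def divide_right_mono)
  also have "\<dots> \<le> upp m' \<omega>" using upp_mono[of \<omega>] by (auto simp: decseq_def)
  finally show ?thesis .
qed

lemma V_bounds: "low m \<omega> \<le> V \<omega>" "V \<omega> \<le> upp m \<omega>"
proof -
  have bdd: "bdd_above (range (\<lambda>m. low m \<omega>))" using low_le_upp by (auto intro!: bdd_aboveI[of _ "upp 0 \<omega>"])
  show "low m \<omega> \<le> V \<omega>" unfolding V_def by (rule cSUP_upper[OF _ bdd]) auto
  show "V \<omega> \<le> upp m \<omega>" unfolding V_def by (rule cSUP_least) (auto intro: low_le_upp)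
qed

lemma V_01: "0 \<le> V \<omega>" "V \<omega> \<le> 1"
  using V_bounds[where m=0 and \<omega>=\<omega>] by (auto simp: low_def upp_def)

lemma V_measurable: "V \<in> borel_measurable M"
  unfolding V_def
proof (rule borel_measurable_cSUP)
  fix m
  show "low m \<in> borel_measurable M" unfolding low_def
    using measurable_compose[OF cc_measurable[of m], of "\<lambda>k. real k / 2 ^ m" borel]
    by (simp add: borel_measurable_count_space)
  fix \<omega> show "bdd_above (range (\<lambda>m. low m \<omega>))"
    using low_le_upp by (auto intro!: bdd_aboveI[of _ "upp 0 \<omega>"])
qed simp

lemma V_cdf:
  assumes y: "0 \<le> y" "y \<le> 1"
  shows "measure M {\<omega>\<in>space M. V \<omega> \<le> y} = y"
proof -
  have sV: "{\<omega>\<in>space M. V \<omega> \<le> y} \<in> sets M" using V_measurable by measurable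
  have bnd: "y - 1 / 2 ^ m \<le> measure M {\<omega>\<in>space M. V \<omega> \<le> y} \<and> measure M {\<omega>\<in>space M. V \<omega> \<le> y} \<le> y + 1 / 2 ^ m" for m
  proof -
    define j where "j = nat \<lfloor>y * 2 ^ m\<rfloor>"
    have j1: "real j \<le> y * 2 ^ m" "y * 2 ^ m < real j + 1" using y
      by (auto simp: j_def)
    have j2: "j \<le> 2 ^ m"
    proof -
      have "y * 2 ^ m \<le> 2 ^ m" using y by (intro mult_left_le_one_le) auto
      then have "real j \<le> 2 ^ m" using j1 by linarith
      then show ?thesis by (metis of_nat_le_iff of_nat_numeral of_nat_power)
    qed
    have s1: "{\<omega>\<in>space M. cc m \<omega> < j} \<subseteq> {\<omega>\<in>space M. V \<omega> \<le> y}"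
    proof safe
      fix \<omega> assume "\<omega> \<in> space M" "cc m \<omega> < j"
      then have "real (cc m \<omega>) + 1 \<le> real j" by linarith
      then have "upp m \<omega> \<le> real j / 2 ^ m" by (simp add: upp_def divide_right_mono)
      also have "\<dots> \<le> y" using j1 by (simp add: field_simps)
      finally show "V \<omega> \<le> y" using V_bounds[where m=m and \<omega>=\<omega>] by linarith
    qed
    have s2: "{\<omega>\<in>space M. V \<omega> \<le> y} \<subseteq> {\<omega>\<in>space M. cc m \<omega> < Suc j}"
    proof safe
      fix \<omega> assume "\<omega> \<in> space M" "V \<omega> \<le> y"
      then have "low m \<omega> \<le> y" using V_bounds[where m=m and \<omega>=\<omega>] by linarith
      then have "real (cc m \<omega>) \<le> y * 2 ^ m" by (simp add: low_def field_simps)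
      then have "real (cc m \<omega>) < real j + 1" using j1 by linarith
      then show "cc m \<omega> < Suc j" by linarith
    qed
    have m1: "measure M {\<omega>\<in>space M. cc m \<omega> < j} \<le> measure M {\<omega>\<in>space M. V \<omega> \<le> y}"
      using s1 sV by (intro finite_measure_mono) auto
    have m2: "measure M {\<omega>\<in>space M. V \<omega> \<le> y} \<le> (real j + 1) / 2 ^ m"
    proof (cases "Suc j \<le> 2 ^ m")
      case True
      have "measure M {\<omega>\<in>space M. V \<omega> \<le> y} \<le> measure M {\<omega>\<in>space M. cc m \<omega> < Suc j}"
        using s2 sV cc_measurable
        by (intro finite_measure_mono) (auto simp: measure_cc_less[OF True])
      then show ?thesis using measure_cc_less[OF True] by (simp add: add.commute)
    next
      case False
      then have "1 \<le> (real j + 1) / 2 ^ m" by (simp add: field_simps) (metis of_nat_Suc of_nat_le_iff of_nat_numeral of_nat_power not_le less_imp_le)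
      then show ?thesis using prob_le_1 by (meson order.trans)
    qed
    have jy: "real j / 2 ^ m \<le> y" using j1 by (simp add: pos_divide_le_eq)
    have yj: "y < (real j + 1) / 2 ^ m" using j1 by (simp add: pos_less_divide_eq)
    have "(real j + 1) / 2 ^ m = real j / 2 ^ m + 1 / 2 ^ m" by (simp add: add_divide_distrib)
    then have "y - 1 / 2 ^ m \<le> real j / 2 ^ m" "(real j + 1) / 2 ^ m \<le> y + 1 / 2 ^ m"
      using jy yj by linarith+
    moreover
    ultimately show ?thesis using m1 m2 measure_cc_less[OF j2] by linarith
  qed
  show ?thesis
  proof (rule ccontr)
    assume ne: "measure M {\<omega>\<in>space M. V \<omega> \<le> y} \<noteq> y"
    then have "0 < \<bar>measure M {\<omega>\<in>space M. V \<omega> \<le> y} - y\<bar>" by auto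
    then obtain m where "(1/2::real) ^ m < \<bar>measure M {\<omega>\<in>space M. V \<omega> \<le> y} - y\<bar>"
      using real_arch_pow_inv[of "\<bar>measure M {\<omega>\<in>space M. V \<omega> \<le> y} - y\<bar>" "1/2"] by auto
    then show False using bnd[of m] by (auto simp: power_one_over)
  qed
qed


lemma cdf_Unif: "cdfX Lam (\<lambda>x. x) y = (if y < 0 then 0 else if y < 1 then y else 1)"
proof -
  have "cdfX Lam (\<lambda>x. x) y = measure Lam {\<beta>\<in>{0<..<1}. \<beta> \<le> y}"
    by (simp add: cdfX_def space_Lam)
  also have "\<dots> = measure lborel {\<beta>\<in>{0<..<1}. \<beta> \<le> y}"
    unfolding Lam_def by (subst measure_restrict_space) auto
  also have "\<dots> = (if y < 0 then 0 else if y < 1 then y else 1)"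
  proof -
    consider "y \<le> 0" | "0 < y" "y < 1" | "1 \<le> y" by linarith
    then show ?thesis
    proof cases
      case 1
      then have e: "{\<beta>\<in>{0<..<1::real}. \<beta> \<le> y} = {}" by auto
      show ?thesis unfolding e using 1 by auto
    next
      case 2
      then have e: "{\<beta>\<in>{0<..<1::real}. \<beta> \<le> y} = {0<..y}" by auto
      show ?thesis unfolding e using 2 by auto
    next
      case 3
      then have e: "{\<beta>\<in>{0<..<1::real}. \<beta> \<le> y} = {0<..<1}" by auto
      show ?thesis unfolding e using 3 by auto
    qed
  qed
  finally show ?thesis .
qed

lemma distr_V: "distr M borel V = distr Lam borel (\<lambda>x. x)"
proof -
  have idm: "(\<lambda>x. x) \<in> borel_measurable Lam" unfolding Lam_def by (intro measurable_restrict_space1) simp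
  show ?thesis
proof (rule cdf_unique)
  show "real_distribution (distr M borel V)" using V_measurable by simp
  show "real_distribution (distr Lam borel (\<lambda>x. x))"
    using prob_space.real_distribution_distr[OF prob_space_Lam] idm by blast
  have "cdfX M V = cdfX Lam (\<lambda>x. x)"
  proof
    fix y :: real
    consider "y < 0" | "0 \<le> y" "y < 1" | "1 \<le> y" by linarith
    then show "cdfX M V y = cdfX Lam (\<lambda>x. x) y"
    proof cases
      case 1
      then have "\<not> V \<omega> \<le> y" for \<omega> using V_01(1)[of \<omega>] by linarith
      then have e: "{\<omega>\<in>space M. V \<omega> \<le> y} = {}" by auto
      show ?thesis unfolding cdf_Unif cdfX_def[of M] e using 1 by simp
    next
      case 2
      then show ?thesis unfolding cdf_Unif cdfX_def[of M] using V_cdf[of y] by simp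
    next
      case 3
      then have "V \<omega> \<le> y" for \<omega> using V_01(2)[of \<omega>] by linarith
      then have e: "{\<omega>\<in>space M. V \<omega> \<le> y} = space M" by auto
      show ?thesis unfolding cdf_Unif cdfX_def[of M] e using 3 by (simp add: prob_space)
    qed
  qed
  then show "cdf (distr M borel V) = cdf (distr Lam borel (\<lambda>x. x))"
    using cdfX_eq_cdf[OF V_measurable] cdfX_eq_cdf[OF idm] by simp
qed
qed

end

lemma Q_meas_Lam:
  assumes "prob_space M" "X \<in> borel_measurable M"
  shows "Q M X \<in> borel_measurable Lam"
  unfolding Lam_def using Q_measurable[OF assms]
  by (intro measurable_restrict_space1) simp

lemma integrable_Lam:
  fixes f :: "real \<Rightarrow> real" and B :: real
  assumes "f \<in> borel_measurable borel" "\<And>\<beta>. \<beta> \<in> {0<..<1} \<Longrightarrow> \<bar>f \<beta>\<bar> \<le> B"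
  shows "integrable Lam f"
proof -
  interpret L: prob_space Lam by (rule prob_space_Lam)
  show ?thesis
  proof (rule L.integrable_const_bound[where B=B])
    show "AE x in Lam. norm (f x) \<le> B" using assms(2) by (intro AE_I2) (auto simp: space_Lam)
    show "f \<in> borel_measurable Lam" unfolding Lam_def using assms(1)
      by (intro measurable_restrict_space1) simp
  qed
qed

lemma measure_Lam_Ioo:
  assumes "0 \<le> a" "a \<le> b" "b \<le> 1"
  shows "measure Lam {a<..<b} = b - a"
  unfolding Lam_def using assms
  by (subst measure_restrict_space) auto

lemma integral_Lam_ind_const:
  assumes "0 \<le> a" "a \<le> b" "b \<le> 1"
  shows "integral\<^sup>L Lam (\<lambda>\<beta>. indicator {a<..<b} \<beta> * c) = c * (b - a)"
proof -
  interpret L: prob_space Lam by (rule prob_space_Lam)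
  have "{a<..<b} \<in> sets Lam" unfolding sets_Lam using assms
    by (auto simp: sets_restrict_space image_iff intro!: exI[of _ "{a<..<b}"])
  then show ?thesis
    using measure_Lam_Ioo[OF assms] by simp
qed

lemma ES_eq:
  assumes "prob_space M" "X \<in> borel_measurable M" "0 \<le> \<alpha>" "\<alpha> < 1"
  shows "ES M \<alpha> X = ereal (1 / (1 - \<alpha>) * integral\<^sup>L Lam (\<lambda>\<beta>. indicator {\<alpha><..<1} \<beta> * Q M X \<beta>))"
proof -
  have "(LBINT \<beta>=ereal \<alpha>..ereal 1. real_of_ereal (VaR M \<beta> X))
      = (LBINT \<beta>:{\<alpha><..<1}. real_of_ereal (VaR M \<beta> X))"
    using assms by (subst interval_integral_Ioo) auto
  also have "\<dots> = integral\<^sup>L lborel (\<lambda>\<beta>. indicator {\<alpha><..<1} \<beta> * real_of_ereal (VaR M \<beta> X))"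
    by (simp add: set_lebesgue_integral_def)
  also have "\<dots> = integral\<^sup>L lborel (\<lambda>\<beta>. indicator {0<..<1} \<beta> *\<^sub>R (indicator {\<alpha><..<1} \<beta> * Q M X \<beta>))"
  proof (rule Bochner_Integration.integral_cong)
    fix \<beta> :: real
    show "indicator {\<alpha><..<1} \<beta> * real_of_ereal (VaR M \<beta> X) =
      indicator {0<..<1} \<beta> *\<^sub>R (indicator {\<alpha><..<1} \<beta> * Q M X \<beta>)"
      using VaR_eq_Q[OF assms(1,2), of \<beta>] assms(3) by (auto simp: indicator_def)
  qed simp
  also have "\<dots> = integral\<^sup>L Lam (\<lambda>\<beta>. indicator {\<alpha><..<1} \<beta> * Q M X \<beta>)"
    unfolding Lam_def by (subst integral_restrict_space) auto
  finally show ?thesis using assms by (simp add: ES_def)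
qed

lemma VaR_law:
  assumes "X \<in> borel_measurable M" "Y \<in> borel_measurable M" "distr M borel X = distr M borel Y"
  shows "VaR M \<beta> X = VaR M \<beta> Y"
proof -
  have "\<And>x. measure M {\<omega>\<in>space M. X \<omega> \<le> x} = measure M {\<omega>\<in>space M. Y \<omega> \<le> x}"
    using cdfX_eq_cdf[OF assms(1)] cdfX_eq_cdf[OF assms(2)] assms(3)
    by (metis cdfX_def)
  then show ?thesis by (simp add: VaR_def)
qed

lemma ES_law_invariant: "law_invariant M (ES M \<alpha>)"
  unfolding law_invariant_def
proof (intro ballI impI)
  fix X Y assume "X \<in> Linf M" "Y \<in> Linf M" "distr M borel X = distr M borel Y"
  then have "\<And>\<beta>. VaR M \<beta> X = VaR M \<beta> Y"
    by (intro VaR_law) (auto simp: Linf_def)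
  then show "ES M \<alpha> X = ES M \<alpha> Y" by (simp add: ES_def)
qed

lemma VaR_le_VaR_plus: "VaR M \<alpha> X \<le> VaR_plus M \<alpha> X"
  unfolding VaR_def VaR_plus_def by (rule Inf_superset_mono) auto

lemma VaR_plus_le_Q:
  assumes "prob_space M" "X \<in> borel_measurable M" "\<alpha> < \<beta>" "0 < \<beta>" "\<beta> < 1"
  shows "VaR_plus M \<alpha> X \<le> ereal (Q M X \<beta>)"
proof -
  have "\<beta> \<le> cdfX M X (Q M X \<beta>)" using Q_pseudo[OF assms(1,2,4,5)] by simp
  then have "Q M X \<beta> \<in> {x. measure M {\<omega>\<in>space M. X \<omega> \<le> x} > \<alpha>}"
    using assms(3) by (auto simp: cdfX_def)
  then show ?thesis unfolding VaR_plus_def by (auto intro: Inf_lower)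
qed

lemma ES_ge_VaR_plus:
  assumes "prob_space M" "X \<in> Linf M" "0 \<le> \<alpha>" "\<alpha> < 1"
  shows "VaR_plus M \<alpha> X \<le> ES M \<alpha> X"
proof -
  obtain C where X: "X \<in> borel_measurable M" "0 \<le> C" "AE \<omega> in M. \<bar>X \<omega>\<bar> \<le> C"
    using LinfD[OF assms(2)] by blast
  define \<beta> where "\<beta> = (\<alpha> + 1) / 2"
  have \<beta>: "\<alpha> < \<beta>" "0 < \<beta>" "\<beta> < 1" using assms by (auto simp: \<beta>_def)
  have le: "VaR_plus M \<alpha> X \<le> ereal (Q M X \<beta>)" using VaR_plus_le_Q[OF assms(1) X(1) \<beta>] .
  show ?thesis
  proof (cases "VaR_plus M \<alpha> X")
    case (real v)
    have vle: "v \<le> Q M X b" if "b \<in> {\<alpha><..<1}" for b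
      using VaR_plus_le_Q[OF assms(1) X(1), of \<alpha> b] that assms real by auto
    have "v * (1 - \<alpha>) = integral\<^sup>L Lam (\<lambda>b. indicator {\<alpha><..<1} b * v)"
      using integral_Lam_ind_const[of \<alpha> 1 v] assms by (simp only: diff_self)
    also have "\<dots> \<le> integral\<^sup>L Lam (\<lambda>b. indicator {\<alpha><..<1} b * Q M X b)"
    proof (rule integral_mono)
      show "integrable Lam (\<lambda>b. indicator {\<alpha><..<1} b * v)"
        by (rule integrable_Lam[where B="\<bar>v\<bar>"]) (auto simp: indicator_def)
      show "integrable Lam (\<lambda>b. indicator {\<alpha><..<1} b * Q M X b)"
        by (rule integrable_Lam[where B=C])
           (use Q_measurable[OF assms(1) X(1)] Q_bound[OF assms(1) X(1,3,2)] X(2) in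
             \<open>auto simp: indicator_def\<close>)
      show "indicator {\<alpha><..<1} b * v \<le> indicator {\<alpha><..<1} b * Q M X b" for b
        using vle[of b] by (auto simp: indicator_def)
    qed
    finally have "v \<le> 1 / (1 - \<alpha>) * integral\<^sup>L Lam (\<lambda>b. indicator {\<alpha><..<1} b * Q M X b)"
      using assms by (simp add: field_simps)
    then show ?thesis using real ES_eq[OF assms(1) X(1) assms(3,4)] by simp
  qed (use le in auto)
qed

lemma Linf_comb:
  assumes "X \<in> Linf M" "Y \<in> Linf M" "0 \<le> \<gamma>" "\<gamma> \<le> 1"
  shows "(\<lambda>\<omega>. \<gamma> * X \<omega> + (1 - \<gamma>) * Y \<omega>) \<in> Linf M"
proof -
  obtain C where X: "X \<in> borel_measurable M" "0 \<le> C" "AE \<omega> in M. \<bar>X \<omega>\<bar> \<le> C"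
    using LinfD[OF assms(1)] by blast
  obtain D where Y: "Y \<in> borel_measurable M" "0 \<le> D" "AE \<omega> in M. \<bar>Y \<omega>\<bar> \<le> D"
    using LinfD[OF assms(2)] by blast
  have "AE \<omega> in M. \<bar>\<gamma> * X \<omega> + (1 - \<gamma>) * Y \<omega>\<bar> \<le> C + D"
    using X(3) Y(3)
  proof eventually_elim
    case (elim \<omega>)
    have "\<bar>\<gamma> * X \<omega> + (1 - \<gamma>) * Y \<omega>\<bar> \<le> \<bar>\<gamma> * X \<omega>\<bar> + \<bar>(1 - \<gamma>) * Y \<omega>\<bar>"
      by (rule abs_triangle_ineq)
    also have "\<dots> = \<gamma> * \<bar>X \<omega>\<bar> + (1 - \<gamma>) * \<bar>Y \<omega>\<bar>"
      using assms(3,4) by (simp add: abs_mult)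
    also have "\<dots> \<le> 1 * C + 1 * D"
      using elim assms(3,4) X(2) Y(2)
      by (intro add_mono mult_mono) auto
    finally show ?case by simp
  qed
  then show ?thesis using X(1) Y(1) by (auto simp: Linf_def)
qed

lemma integral_plus_part_Q:
  assumes "prob_space M" "X \<in> borel_measurable M"
  shows "integral\<^sup>L M (\<lambda>\<omega>. max (X \<omega> - t) 0) = integral\<^sup>L Lam (\<lambda>\<beta>. max (Q M X \<beta> - t) 0)"
proof -
  have "integral\<^sup>L M (\<lambda>\<omega>. max (X \<omega> - t) 0) = integral\<^sup>L (distr M borel X) (\<lambda>x. max (x - t) 0)"
    using assms(2) by (subst integral_distr) auto
  also have "\<dots> = integral\<^sup>L (distr Lam borel (Q M X)) (\<lambda>x. max (x - t) 0)"
    using distr_Q[OF assms] by simp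
  also have "\<dots> = integral\<^sup>L Lam (\<lambda>\<beta>. max (Q M X \<beta> - t) 0)"
    using Q_meas_Lam[OF assms] by (subst integral_distr) auto
  finally show ?thesis .
qed

definition Aint :: "'a measure \<Rightarrow> real \<Rightarrow> ('a \<Rightarrow> real) \<Rightarrow> real" where
  "Aint M \<alpha> X = integral\<^sup>L Lam (\<lambda>\<beta>. indicator {\<alpha><..<1} \<beta> * Q M X \<beta>)"

lemma integrable_plus_M:
  assumes "prob_space M" "X \<in> Linf M"
  shows "integrable M (\<lambda>\<omega>. max (X \<omega> - t) 0)"
proof -
  interpret prob_space M by fact
  obtain C where X: "X \<in> borel_measurable M" "0 \<le> C" "AE \<omega> in M. \<bar>X \<omega>\<bar> \<le> C"
    using LinfD[OF assms(2)] by blast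
  show ?thesis
  proof (rule integrable_const_bound[where B="C + \<bar>t\<bar>"])
    show "AE x in M. norm (max (X x - t) 0) \<le> C + \<bar>t\<bar>"
      using X(3) by eventually_elim auto
  qed (use X(1) in auto)
qed

lemma Aint_le:
  assumes "prob_space M" "X \<in> Linf M" "0 \<le> \<alpha>" "\<alpha> < 1"
  shows "Aint M \<alpha> X \<le> t * (1 - \<alpha>) + integral\<^sup>L M (\<lambda>\<omega>. max (X \<omega> - t) 0)"
proof -
  obtain C where X: "X \<in> borel_measurable M" "0 \<le> C" "AE \<omega> in M. \<bar>X \<omega>\<bar> \<le> C"
    using LinfD[OF assms(2)] by blast
  note Qm = Q_measurable[OF assms(1) X(1)]
  note Qb = Q_bound[OF assms(1) X(1,3,2)]
  have i1: "integrable Lam (\<lambda>b. indicator {\<alpha><..<1} b * Q M X b)"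
    by (rule integrable_Lam[where B=C]) (use Qm Qb X(2) in \<open>auto simp: indicator_def\<close>)
  have i2: "integrable Lam (\<lambda>b. indicator {\<alpha><..<1} b * t)"
    by (rule integrable_Lam[where B="\<bar>t\<bar>"]) (auto simp: indicator_def)
  have i3: "integrable Lam (\<lambda>b. max (Q M X b - t) 0)"
  proof (rule integrable_Lam[where B="C + \<bar>t\<bar>"])
    fix b :: real
    have "\<bar>Q M X b\<bar> \<le> C" by (rule Qb)
    then show "\<bar>max (Q M X b - t) 0\<bar> \<le> C + \<bar>t\<bar>" by auto
  qed (use Qm in auto)
  have "Aint M \<alpha> X \<le> integral\<^sup>L Lam (\<lambda>b. indicator {\<alpha><..<1} b * t + max (Q M X b - t) 0)"
    unfolding Aint_def
  proof (rule integral_mono)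
    show "integrable Lam (\<lambda>b. indicator {\<alpha><..<1} b * t + max (Q M X b - t) 0)"
      using i2 i3 by auto
    show "indicator {\<alpha><..<1} b * Q M X b \<le> indicator {\<alpha><..<1} b * t + max (Q M X b - t) 0" for b
      by (auto simp: indicator_def)
  qed (rule i1)
  also have "\<dots> = t * (1 - \<alpha>) + integral\<^sup>L Lam (\<lambda>b. max (Q M X b - t) 0)"
    using i2 i3 integral_Lam_ind_const[of \<alpha> 1 t] assms(3,4) by simp
  also have "\<dots> = t * (1 - \<alpha>) + integral\<^sup>L M (\<lambda>\<omega>. max (X \<omega> - t) 0)"
    using integral_plus_part_Q[OF assms(1) X(1)] by simp
  finally show ?thesis .
qed

lemma Aint_eq:
  assumes "prob_space M" "X \<in> Linf M" "0 \<le> \<alpha>" "\<alpha> < 1"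
  shows "\<exists>t. Aint M \<alpha> X = t * (1 - \<alpha>) + integral\<^sup>L M (\<lambda>\<omega>. max (X \<omega> - t) 0)"
proof -
  obtain C where X: "X \<in> borel_measurable M" "0 \<le> C" "AE \<omega> in M. \<bar>X \<omega>\<bar> \<le> C"
    using LinfD[OF assms(2)] by blast
  note Qm = Q_measurable[OF assms(1) X(1)]
  note Qb = Q_bound[OF assms(1) X(1,3,2)]
  define t where "t = (if \<alpha> = 0 then - C else Q M X \<alpha>)"
  have i2: "integrable Lam (\<lambda>b. indicator {\<alpha><..<1} b * t)"
    by (rule integrable_Lam[where B="\<bar>t\<bar>"]) (auto simp: indicator_def)
  have i3: "integrable Lam (\<lambda>b. max (Q M X b - t) 0)"
  proof (rule integrable_Lam[where B="C + \<bar>t\<bar>"])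
    fix b :: real
    have "\<bar>Q M X b\<bar> \<le> C" by (rule Qb)
    then show "\<bar>max (Q M X b - t) 0\<bar> \<le> C + \<bar>t\<bar>" by auto
  qed (use Qm in auto)
  have "Aint M \<alpha> X = integral\<^sup>L Lam (\<lambda>b. indicator {\<alpha><..<1} b * t + max (Q M X b - t) 0)"
    unfolding Aint_def
  proof (rule Bochner_Integration.integral_cong)
    fix b assume "b \<in> space Lam"
    then have b: "0 < b" "b < 1" by (auto simp: space_Lam)
    show "indicator {\<alpha><..<1} b * Q M X b = indicator {\<alpha><..<1} b * t + max (Q M X b - t) 0"
    proof (cases "\<alpha> < b")
      case True
      have "t \<le> Q M X b"
      proof (cases "\<alpha> = 0")
        case True then show ?thesis using Qb[of b] by (auto simp: t_def)
      next
        case False then show ?thesis using Q_mono[OF assms(1) X(1), of \<alpha> b] \<open>\<alpha> < b\<close> assms b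
          by (auto simp: t_def)
      qed
      then show ?thesis using True b by (auto simp: indicator_def)
    next
      case False
      then have "\<alpha> \<noteq> 0" using b by auto
      then have "Q M X b \<le> t" using Q_mono[OF assms(1) X(1), of b \<alpha>] False b assms
        by (auto simp: t_def)
      then show ?thesis using False by (auto simp: indicator_def)
    qed
  qed simp
  also have "\<dots> = t * (1 - \<alpha>) + integral\<^sup>L Lam (\<lambda>b. max (Q M X b - t) 0)"
    using i2 i3 integral_Lam_ind_const[of \<alpha> 1 t] assms(3,4) by simp
  also have "\<dots> = t * (1 - \<alpha>) + integral\<^sup>L M (\<lambda>\<omega>. max (X \<omega> - t) 0)"
    using integral_plus_part_Q[OF assms(1) X(1)] by simp
  finally show ?thesis by blast
qed

lemma Aint_convex:
  assumes "prob_space M" "X \<in> Linf M" "Y \<in> Linf M" "0 \<le> \<alpha>" "\<alpha> < 1" "0 \<le> \<gamma>" "\<gamma> \<le> 1"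
  shows "Aint M \<alpha> (\<lambda>\<omega>. \<gamma> * X \<omega> + (1 - \<gamma>) * Y \<omega>) \<le> \<gamma> * Aint M \<alpha> X + (1 - \<gamma>) * Aint M \<alpha> Y"
proof -
  obtain s where s: "Aint M \<alpha> X = s * (1 - \<alpha>) + integral\<^sup>L M (\<lambda>\<omega>. max (X \<omega> - s) 0)"
    using Aint_eq[OF assms(1,2,4,5)] by blast
  obtain u where u: "Aint M \<alpha> Y = u * (1 - \<alpha>) + integral\<^sup>L M (\<lambda>\<omega>. max (Y \<omega> - u) 0)"
    using Aint_eq[OF assms(1,3,4,5)] by blast
  define t where "t = \<gamma> * s + (1 - \<gamma>) * u"
  define Z where "Z = (\<lambda>\<omega>. \<gamma> * X \<omega> + (1 - \<gamma>) * Y \<omega>)"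
  have Z: "Z \<in> Linf M" unfolding Z_def by (rule Linf_comb) (use assms in auto)
  note iX = integrable_plus_M[OF assms(1,2), of s]
  note iY = integrable_plus_M[OF assms(1,3), of u]
  note iZ = integrable_plus_M[OF assms(1) Z, of t]
  have "Aint M \<alpha> Z \<le> t * (1 - \<alpha>) + integral\<^sup>L M (\<lambda>\<omega>. max (Z \<omega> - t) 0)"
    by (rule Aint_le[OF assms(1) Z assms(4,5)])
  also have "integral\<^sup>L M (\<lambda>\<omega>. max (Z \<omega> - t) 0) \<le>
      integral\<^sup>L M (\<lambda>\<omega>. \<gamma> * max (X \<omega> - s) 0 + (1 - \<gamma>) * max (Y \<omega> - u) 0)"
  proof (rule integral_mono)
    show "integrable M (\<lambda>\<omega>. \<gamma> * max (X \<omega> - s) 0 + (1 - \<gamma>) * max (Y \<omega> - u) 0)"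
      using iX iY by auto
    fix \<omega>
    have "Z \<omega> - t = \<gamma> * (X \<omega> - s) + (1 - \<gamma>) * (Y \<omega> - u)"
      by (simp add: Z_def t_def algebra_simps)
    also have "\<dots> \<le> \<gamma> * max (X \<omega> - s) 0 + (1 - \<gamma>) * max (Y \<omega> - u) 0"
      using assms(6,7) by (intro add_mono mult_left_mono) auto
    finally show "max (Z \<omega> - t) 0 \<le> \<gamma> * max (X \<omega> - s) 0 + (1 - \<gamma>) * max (Y \<omega> - u) 0"
      using assms(6,7) by auto
  qed (rule iZ)
  also have "integral\<^sup>L M (\<lambda>\<omega>. \<gamma> * max (X \<omega> - s) 0 + (1 - \<gamma>) * max (Y \<omega> - u) 0)
      = \<gamma> * integral\<^sup>L M (\<lambda>\<omega>. max (X \<omega> - s) 0) + (1 - \<gamma>) * integral\<^sup>L M (\<lambda>\<omega>. max (Y \<omega> - u) 0)"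
    using iX iY by simp
  finally have "Aint M \<alpha> Z \<le> t * (1 - \<alpha>) + (\<gamma> * integral\<^sup>L M (\<lambda>\<omega>. max (X \<omega> - s) 0) +
      (1 - \<gamma>) * integral\<^sup>L M (\<lambda>\<omega>. max (Y \<omega> - u) 0))" by simp
  also have "\<dots> = \<gamma> * Aint M \<alpha> X + (1 - \<gamma>) * Aint M \<alpha> Y"
    unfolding s u t_def by (simp add: algebra_simps)
  finally show ?thesis unfolding Z_def .
qed

lemma ES_quasi_convex_lt1:
  assumes "prob_space M" "0 \<le> \<alpha>" "\<alpha> < 1"
  shows "quasi_convex M (ES M \<alpha>)"
  unfolding quasi_convex_def
proof (intro ballI allI impI)
  fix X Y and \<gamma> :: real
  assume XY: "X \<in> Linf M" "Y \<in> Linf M" and g: "0 \<le> \<gamma> \<and> \<gamma> \<le> 1"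
  define Z where "Z = (\<lambda>\<omega>. \<gamma> * X \<omega> + (1 - \<gamma>) * Y \<omega>)"
  have Z: "Z \<in> Linf M" unfolding Z_def by (rule Linf_comb) (use XY g in auto)
  have ES: "ES M \<alpha> W = ereal (1 / (1 - \<alpha>) * Aint M \<alpha> W)" if "W \<in> Linf M" for W
    using ES_eq[OF assms(1) _ assms(2,3), of W] that by (auto simp: Aint_def Linf_def)
  have c: "Aint M \<alpha> Z \<le> \<gamma> * Aint M \<alpha> X + (1 - \<gamma>) * Aint M \<alpha> Y"
    unfolding Z_def by (rule Aint_convex) (use assms XY g in auto)
  have "\<gamma> * Aint M \<alpha> X + (1 - \<gamma>) * Aint M \<alpha> Y \<le> \<gamma> * max (Aint M \<alpha> X) (Aint M \<alpha> Y) + (1 - \<gamma>) * max (Aint M \<alpha> X) (Aint M \<alpha> Y)"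
    using g by (intro add_mono mult_left_mono) auto
  then have zm: "Aint M \<alpha> Z \<le> max (Aint M \<alpha> X) (Aint M \<alpha> Y)" using c by (simp add: algebra_simps)
  then have "1 / (1 - \<alpha>) * Aint M \<alpha> Z \<le> max (1 / (1 - \<alpha>) * Aint M \<alpha> X) (1 / (1 - \<alpha>) * Aint M \<alpha> Y)"
  proof (cases "Aint M \<alpha> X \<le> Aint M \<alpha> Y")
    case True
    then have "Aint M \<alpha> Z \<le> Aint M \<alpha> Y" using zm by simp
    then have "1 / (1 - \<alpha>) * Aint M \<alpha> Z \<le> 1 / (1 - \<alpha>) * Aint M \<alpha> Y"
      using assms by (intro mult_left_mono) auto
    then show ?thesis by simp
  next
    case False
    then have "Aint M \<alpha> Z \<le> Aint M \<alpha> X" using zm by simp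
    then have "1 / (1 - \<alpha>) * Aint M \<alpha> Z \<le> 1 / (1 - \<alpha>) * Aint M \<alpha> X"
      using assms by (intro mult_left_mono) auto
    then show ?thesis by simp
  qed
  then show "ES M \<alpha> Z \<le> max (ES M \<alpha> X) (ES M \<alpha> Y)"
    using ES[OF Z] ES[OF XY(1)] ES[OF XY(2)] by (auto simp: max_def split: if_split_asm)
qed

lemma meas_ge1_AE:
  fixes X :: "'a \<Rightarrow> real"
  assumes "prob_space M" "X \<in> borel_measurable M" "1 \<le> measure M {\<omega>\<in>space M. X \<omega> \<le> x}"
  shows "AE \<omega> in M. X \<omega> \<le> x"
proof -
  interpret prob_space M by fact
  have "X -` {..x} \<inter> space M \<in> sets M" by (rule measurable_sets[OF assms(2)]) auto
  moreover have "X -` {..x} \<inter> space M = {\<omega>\<in>space M. X \<omega> \<le> x}" by auto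
  ultimately have ms: "{\<omega>\<in>space M. X \<omega> \<le> x} \<in> sets M" by simp
  have "measure M {\<omega>\<in>space M. X \<omega> \<le> x} = 1"
    using assms(3) prob_le_1[of "{\<omega>\<in>space M. X \<omega> \<le> x}"] by linarith
  then show ?thesis using ms by (subst (asm) prob_Collect_eq_1) auto
qed

lemma ES1_quasi_convex:
  assumes "prob_space M"
  shows "quasi_convex M (ES M 1)"
  unfolding quasi_convex_def
proof (intro ballI allI impI)
  interpret P: prob_space M by fact
  fix X Y and \<gamma> :: real
  assume XY: "X \<in> Linf M" "Y \<in> Linf M" and g: "0 \<le> \<gamma> \<and> \<gamma> \<le> 1"
  define Z where "Z = (\<lambda>\<omega>. \<gamma> * X \<omega> + (1 - \<gamma>) * Y \<omega>)"
  have Z: "Z \<in> Linf M" unfolding Z_def by (rule Linf_comb) (use XY g in auto)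
  have mX: "X \<in> borel_measurable M" and mY: "Y \<in> borel_measurable M" and mZ: "Z \<in> borel_measurable M"
    using XY Z by (auto simp: Linf_def)
  have "VaR M 1 Z \<le> max (VaR M 1 X) (VaR M 1 Y)"
    unfolding VaR_def[of M 1 Z]
  proof (subst Inf_le_iff, intro allI impI)
    fix v assume v: "max (VaR M 1 X) (VaR M 1 Y) < v"
    then have "VaR M 1 X < v" "VaR M 1 Y < v" by auto
    then obtain x y where x: "1 \<le> measure M {\<omega>\<in>space M. X \<omega> \<le> x}" "ereal x < v"
      and y: "1 \<le> measure M {\<omega>\<in>space M. Y \<omega> \<le> y}" "ereal y < v"
      unfolding VaR_def Inf_less_iff by auto
    have aX: "AE \<omega> in M. X \<omega> \<le> x" by (rule meas_ge1_AE[OF assms mX x(1)])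
    have aY: "AE \<omega> in M. Y \<omega> \<le> y" by (rule meas_ge1_AE[OF assms mY y(1)])
    have "AE \<omega> in M. Z \<omega> \<le> max x y"
      using aX aY
    proof eventually_elim
      case (elim \<omega>)
      have "Z \<omega> \<le> \<gamma> * max x y + (1 - \<gamma>) * max x y"
        unfolding Z_def using elim g by (intro add_mono mult_left_mono) auto
      then show ?case by (simp add: algebra_simps)
    qed
    then have "measure M {\<omega>\<in>space M. Z \<omega> \<le> max x y} = 1"
      using mZ by (subst P.prob_Collect_eq_1) auto
    then show "\<exists>a\<in>ereal ` {x. 1 \<le> measure M {\<omega> \<in> space M. Z \<omega> \<le> x}}. a < v"
      using x(2) y(2) by (intro bexI[of _ "ereal (max x y)"]) (auto simp: max_def)
  qed
  then show "ES M 1 Z \<le> max (ES M 1 X) (ES M 1 Y)" by (simp add: ES_def)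
qed

definition rot :: "real \<Rightarrow> real \<Rightarrow> real \<Rightarrow> real" where
  "rot a s \<beta> = (if \<beta> \<le> a then \<beta> else if \<beta> + s \<le> 1 then \<beta> + s else \<beta> + s - (1 - a))"

lemma rot_measurable: "rot a s \<in> borel_measurable borel"
  unfolding rot_def by measurable

lemma measure_lborel_Ioc_max: "measure lborel {l<..u::real} = max 0 (u - l)"
proof (cases "l \<le> u")
  case True then show ?thesis by simp
next
  case False then have "{l<..u} = {}" by auto
  then show ?thesis using False by simp
qed

lemma measure_01_Ioc:
  assumes "S \<in> sets borel"
  shows "measure lborel (S \<inter> {0<..<1::real}) = measure lborel (S \<inter> {0<..1})"
proof -
  have "S \<inter> {0<..1} = (S \<inter> {0<..<1}) \<union> (S \<inter> {1})" by auto
  moreover have "S \<inter> {1} \<in> null_sets lborel"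
  proof (cases "1 \<in> S")
    case True then have "S \<inter> {1} = {1}" by auto
    then show ?thesis by (simp add: countable_imp_null_set_lborel)
  next
    case False then have "S \<inter> {1} = {}" by auto
    then show ?thesis by simp
  qed
  moreover have "S \<inter> {0<..<1} \<in> sets lborel" using assms by simp
  ultimately show ?thesis by (simp add: measure_Un_null_set)
qed

lemma rot_cdf:
  assumes a: "0 \<le> a" "a < 1" and s: "0 \<le> s" "s < 1 - a"
  shows "cdfX Lam (rot a s) y = (if y < 0 then 0 else if y < 1 then y else 1)"
proof -
  have S: "rot a s -` {..y} \<in> sets borel" using rot_measurable[of a s] by (simp add: measurable_sets_borel)
  have "cdfX Lam (rot a s) y = measure Lam {\<beta>\<in>{0<..<1}. rot a s \<beta> \<le> y}"
    by (simp add: cdfX_def space_Lam)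
  also have "\<dots> = measure lborel {\<beta>\<in>{0<..<1}. rot a s \<beta> \<le> y}"
    unfolding Lam_def by (subst measure_restrict_space) auto
  also have "\<dots> = measure lborel (rot a s -` {..y} \<inter> {0<..<1})"
    by (intro arg_cong[where f="measure lborel"]) auto
  also have "\<dots> = measure lborel (rot a s -` {..y} \<inter> {0<..1})"
    by (rule measure_01_Ioc[OF S])
  also have "rot a s -` {..y} \<inter> {0<..1} =
      {0<..min a y} \<union> {a<..min (1 - s) (y - s)} \<union> {1 - s<..min 1 (y - s + (1 - a))}"
    using a s by (auto simp: rot_def split: if_splits)
  also have "measure lborel ({0<..min a y} \<union> {a<..min (1 - s) (y - s)} \<union> {1 - s<..min 1 (y - s + (1 - a))})
      = measure lborel {0<..min a y} + measure lborel {a<..min (1 - s) (y - s)} +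
        measure lborel {1 - s<..min 1 (y - s + (1 - a))}"
  proof -
    have d1: "({0<..min a y} \<union> {a<..min (1 - s) (y - s)}) \<inter> {1 - s<..min 1 (y - s + (1 - a))} = {}"
      using a s by auto
    have d2: "{0<..min a y} \<inter> {a<..min (1 - s) (y - s)} = {}" by auto
    have fin: "emeasure lborel A \<noteq> \<top>" if "A \<subseteq> {0..2}" for A :: "real set"
    proof -
      have "bounded A" using that bounded_subset[OF bounded_closed_interval] by blast
      then show ?thesis using emeasure_bounded_finite[of A] by simp
    qed
    have sub: "{0<..min a y} \<subseteq> {0..2}" "{a<..min (1 - s) (y - s)} \<subseteq> {0..2}"
      "{1 - s<..min 1 (y - s + (1 - a))} \<subseteq> {0..2}" using a s by auto
    have u2: "measure lborel ({0<..min a y} \<union> {a<..min (1 - s) (y - s)}) =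
        measure lborel {0<..min a y} + measure lborel {a<..min (1 - s) (y - s)}"
      by (rule measure_Union) (use sub d2 in \<open>auto intro!: fin\<close>)
    show ?thesis
      using sub by (subst measure_Union) (auto simp: d1 u2 intro!: fin)
  qed
  also have "\<dots> = (if y < 0 then 0 else if y < 1 then y else 1)"
    unfolding measure_lborel_Ioc_max
  proof -
    consider "y < 0" | "0 \<le> y" "y \<le> a" | "a < y" "y < a + s" | "a + s \<le> y" "y < 1" | "1 \<le> y"
      by linarith
    then show "max 0 (min a y - 0) + max 0 (min (1 - s) (y - s) - a) + max 0 (min 1 (y - s + (1 - a)) - (1 - s))
      = (if y < 0 then 0 else if y < 1 then y else 1)"
      by cases (use a s in \<open>auto simp: max_def min_def\<close>)
  qed
  finally show ?thesis .
qed

lemma rot_preserves: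
  assumes a: "0 \<le> a" "a < 1" and s: "0 \<le> s" "s < 1 - a"
  shows "distr Lam borel (rot a s) = distr Lam borel (\<lambda>x. x)"
proof -
  have idm: "(\<lambda>x. x) \<in> borel_measurable Lam" unfolding Lam_def by (intro measurable_restrict_space1) simp
  have rm: "rot a s \<in> borel_measurable Lam" unfolding Lam_def
    using rot_measurable by (intro measurable_restrict_space1) simp
  have r00: "cdfX Lam (rot 0 0) = cdfX Lam (\<lambda>x. x)"
  proof
    fix y
    have "{\<beta>\<in>space Lam. rot 0 0 \<beta> \<le> y} = {\<beta>\<in>space Lam. \<beta> \<le> y}"
      by (auto simp: space_Lam rot_def)
    then show "cdfX Lam (rot 0 0) y = cdfX Lam (\<lambda>x. x) y" by (simp add: cdfX_def)
  qed
  show ?thesis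
  proof (rule cdf_unique)
    show "real_distribution (distr Lam borel (\<lambda>x. x))"
      using prob_space.real_distribution_distr[OF prob_space_Lam] idm by blast
    show "real_distribution (distr Lam borel (rot a s))"
      using prob_space.real_distribution_distr[OF prob_space_Lam] rm by blast
    have "cdfX Lam (rot a s) = cdfX Lam (\<lambda>x. x)"
      using rot_cdf[OF a s] rot_cdf[of 0 0] r00[symmetric] by (auto simp: fun_eq_iff)
    then show "cdf (distr Lam borel (rot a s)) = cdf (distr Lam borel (\<lambda>x. x))"
      using cdfX_eq_cdf[OF idm] cdfX_eq_cdf[OF rm] by simp
  qed
qed

lemma rot_idx_inj:
  fixes n k k' j :: nat
  assumes "k < n" "k' < n" "(j + k) mod n = (j + k') mod n"
  shows "k = k'"
proof -
  let ?r = "j mod n"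
  have r: "?r < n" using assms by simp
  have m: "x mod n = (if x < n then x else x - n)" if "x < 2 * n" for x
    using that by (simp add: mod_if)
  have "(?r + k) mod n = (?r + k') mod n" using assms(3) by (simp add: mod_add_left_eq)
  then show ?thesis using m[of "?r + k"] m[of "?r + k'"] r assms(1,2) by (auto split: if_splits)
qed

lemma rot_idx_bij:
  fixes n j :: nat
  assumes "0 < n"
  shows "bij_betw (\<lambda>k. (j + k) mod n) {..<n} {..<n}"
proof -
  have inj: "inj_on (\<lambda>k. (j + k) mod n) {..<n}"
    by (auto intro!: inj_onI intro: rot_idx_inj)
  have sub: "(\<lambda>k. (j + k) mod n) ` {..<n} \<subseteq> {..<n}" using assms by auto
  show ?thesis unfolding bij_betw_def using endo_inj_surj[OF _ sub inj] inj by simp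
qed

lemma rot_pointwise:
  fixes q :: "real \<Rightarrow> real"
  assumes q: "mono q" and a: "0 \<le> a" "a < 1" and n: "0 < n" and \<beta>: "a < \<beta>" "\<beta> \<le> 1"
  defines "w \<equiv> (1 - a) / real n"
  shows "(\<Sum>j<n. q (a + real j * w)) \<le> (\<Sum>k<n. q (rot a (real k * w) \<beta>))"
proof -
  have w: "0 < w" "real n * w = 1 - a" using a n by (auto simp: w_def)
  define t where "t = (\<beta> - a) / w"
  have t: "0 < t" "t \<le> real n" using \<beta> w by (auto simp: t_def field_simps)
  define j0 where "j0 = nat (\<lceil>t\<rceil> - 1)"
  have j0: "real j0 < t" "t \<le> real j0 + 1" using t by (auto simp: j0_def) linarith+
  have j0n: "j0 < n" using j0 t by linarith
  have bj: "a + real j0 * w < \<beta>" "\<beta> \<le> a + (real j0 + 1) * w"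
    using j0 w by (auto simp: t_def field_simps)
  have key: "a + real ((j0 + k) mod n) * w \<le> rot a (real k * w) \<beta>" if k: "k < n" for k
  proof (cases "j0 + k < n")
    case True
    then have le: "real j0 + 1 + real k \<le> real n" by linarith
    have "\<beta> + real k * w \<le> a + (real j0 + 1 + real k) * w" using bj by (simp add: algebra_simps)
    also have "\<dots> \<le> a + real n * w" using le w by (intro add_left_mono mult_right_mono) auto
    finally have "\<beta> + real k * w \<le> 1" using w by simp
    then have "rot a (real k * w) \<beta> = \<beta> + real k * w" using \<beta> by (simp add: rot_def)
    moreover have "(j0 + k) mod n = j0 + k" using True by simp
    ultimately show ?thesis using bj by (simp add: algebra_simps)
  next
    case False
    then have ge: "real n \<le> real j0 + real k" by linarith
    have "a + real n * w \<le> a + (real j0 + real k) * w" using ge w by (intro add_left_mono mult_right_mono) auto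
    also have "\<dots> < \<beta> + real k * w" using bj by (simp add: algebra_simps)
    finally have gt: "1 < \<beta> + real k * w" using w by simp
    then have "rot a (real k * w) \<beta> = \<beta> + real k * w - (1 - a)" using \<beta> by (simp add: rot_def)
    moreover have "(j0 + k) mod n = j0 + k - n" using False j0n k by (simp add: mod_if)
    moreover have "real (j0 + k - n) = real j0 + real k - real n" using False by auto
    ultimately show ?thesis using bj w by (simp add: algebra_simps)
  qed
  have "(\<Sum>j<n. q (a + real j * w)) = (\<Sum>k<n. q (a + real ((j0 + k) mod n) * w))"
    using sum.reindex_bij_betw[OF rot_idx_bij[OF n, of j0], of "\<lambda>j. q (a + real j * w)"] by simp
  also have "\<dots> \<le> (\<Sum>k<n. q (rot a (real k * w) \<beta>))"
    by (intro sum_mono monoD[OF q] key) auto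
  finally show ?thesis .
qed


lemma ind_split:
  fixes x w :: real
  assumes "0 < w"
  shows "indicator {x<..x + real m * w} \<beta> = (\<Sum>j<m. indicator {x + real j * w<..x + (real j + 1) * w} \<beta> :: real)"
proof (induction m)
  case 0 then show ?case by simp
next
  case (Suc m)
  have "indicator {x<..x + real (Suc m) * w} \<beta> = (indicator {x<..x + real m * w} \<beta> :: real) +
      indicator {x + real m * w<..x + (real m + 1) * w} \<beta>"
  proof -
    have h: "x \<le> x + w * real m" using assms by simp
    show ?thesis using assms h by (auto simp: indicator_def algebra_simps) (use h in linarith)
  qed
  then show ?case using Suc by simp
qed

lemma integral_Lam_ind_Ioc:
  assumes "0 \<le> l" "l \<le> u" "u \<le> 1"
  shows "integral\<^sup>L Lam (\<lambda>\<beta>. indicator {l<..u} \<beta> * c) = c * (u - l)"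
proof -
  interpret L: prob_space Lam by (rule prob_space_Lam)
  have S: "{l<..u} \<inter> {0<..<1} \<in> sets Lam"
    unfolding sets_Lam by (auto simp: sets_restrict_space image_iff intro!: bexI[of _ "{l<..u}"])
  have "integral\<^sup>L Lam (\<lambda>\<beta>. indicator {l<..u} \<beta> * c) = integral\<^sup>L Lam (\<lambda>\<beta>. indicator ({l<..u} \<inter> {0<..<1}) \<beta> * c)"
    by (rule Bochner_Integration.integral_cong) (auto simp: space_Lam indicator_def)
  also have "\<dots> = c * measure Lam ({l<..u} \<inter> {0<..<1})" using S by simp
  also have "measure Lam ({l<..u} \<inter> {0<..<1}) = measure lborel ({l<..u} \<inter> {0<..<1})"
    unfolding Lam_def by (subst measure_restrict_space) auto
  also have "\<dots> = measure lborel ({l<..u} \<inter> {0<..1})" by (rule measure_01_Ioc) simp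
  also have "{l<..u} \<inter> {0<..1} = {l<..u}" using assms by auto
  finally show ?thesis using assms by simp
qed

lemma riemann_bound:
  fixes q :: "real \<Rightarrow> real"
  assumes q: "mono q" and qb: "\<And>x. \<bar>q x\<bar> \<le> C" and a: "0 \<le> a" "a < 1" and n: "0 < n"
  defines "w \<equiv> (1 - a) / real n"
  shows "integral\<^sup>L Lam (\<lambda>\<beta>. indicator {a<..<1} \<beta> * q \<beta>) \<le> w * (\<Sum>j<n. q (a + real j * w)) + 2 * C * w"
proof -
  have w: "0 < w" "real n * w = 1 - a" using a n by (auto simp: w_def)
  have qm: "q \<in> borel_measurable borel" using q by (rule borel_measurable_mono)
  have C0: "0 \<le> C" using qb[of 0] by linarith
  let ?I = "\<lambda>j::nat. {a + real j * w<..a + (real j + 1) * w}"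
  have cell: "0 \<le> a + real j * w" "a + real j * w \<le> a + (real j + 1) * w" "a + (real j + 1) * w \<le> 1"
    if "j < n" for j
  proof -
    show "0 \<le> a + real j * w" using a w by auto
    show "a + real j * w \<le> a + (real j + 1) * w" using w by (simp add: algebra_simps)
    have "real j + 1 \<le> real n" using that by linarith
    then have "(real j + 1) * w \<le> real n * w" using w by (intro mult_right_mono) auto
    then show "a + (real j + 1) * w \<le> 1" using w by simp
  qed
  have int: "integrable Lam (\<lambda>\<beta>. indicator (?I j) \<beta> * q \<beta>)" for j
    by (rule integrable_Lam[where B=C]) (use qm qb C0 in \<open>auto simp: indicator_def\<close>)
  have "integral\<^sup>L Lam (\<lambda>\<beta>. indicator {a<..<1} \<beta> * q \<beta>) =
      integral\<^sup>L Lam (\<lambda>\<beta>. \<Sum>j<n. indicator (?I j) \<beta> * q \<beta>)"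
  proof (rule Bochner_Integration.integral_cong)
    fix \<beta> assume "\<beta> \<in> space Lam"
    then have "\<beta> < 1" by (simp add: space_Lam)
    then have "indicator {a<..<1} \<beta> = (indicator {a<..a + real n * w} \<beta> :: real)"
      using w by (auto simp: indicator_def)
    then show "indicator {a<..<1} \<beta> * q \<beta> = (\<Sum>j<n. indicator (?I j) \<beta> * q \<beta>)"
      using ind_split[OF w(1), of a n \<beta>] by (simp add: sum_distrib_right)
  qed simp
  also have "\<dots> = (\<Sum>j<n. integral\<^sup>L Lam (\<lambda>\<beta>. indicator (?I j) \<beta> * q \<beta>))"
    by (rule Bochner_Integration.integral_sum) (use int in auto)
  also have "\<dots> \<le> (\<Sum>j<n. integral\<^sup>L Lam (\<lambda>\<beta>. indicator (?I j) \<beta> * q (a + (real j + 1) * w)))"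
  proof (rule sum_mono)
    fix j assume "j \<in> {..<n}"
    show "integral\<^sup>L Lam (\<lambda>\<beta>. indicator (?I j) \<beta> * q \<beta>) \<le>
        integral\<^sup>L Lam (\<lambda>\<beta>. indicator (?I j) \<beta> * q (a + (real j + 1) * w))"
    proof (rule integral_mono)
      show "integrable Lam (\<lambda>\<beta>. indicator (?I j) \<beta> * q (a + (real j + 1) * w))"
        by (rule integrable_Lam[where B=C]) (use qb C0 in \<open>auto simp: indicator_def\<close>)
      fix \<beta> show "indicator (?I j) \<beta> * q \<beta> \<le> indicator (?I j) \<beta> * q (a + (real j + 1) * w)"
        by (auto simp: indicator_def intro: monoD[OF q])
    qed (rule int)
  qed
  also have "\<dots> = (\<Sum>j<n. q (a + (real j + 1) * w) * w)"
  proof (rule sum.cong)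
    fix j assume "j \<in> {..<n}"
    then show "integral\<^sup>L Lam (\<lambda>\<beta>. indicator (?I j) \<beta> * q (a + (real j + 1) * w)) = q (a + (real j + 1) * w) * w"
      using integral_Lam_ind_Ioc[OF cell] by (simp add: algebra_simps)
  qed simp
  also have "\<dots> = w * ((\<Sum>j<n. q (a + real j * w)) + (q (a + real n * w) - q a))"
  proof -
    have "(\<Sum>j<n. q (a + real (Suc j) * w) - q (a + real j * w)) = q (a + real n * w) - q (a + real 0 * w)"
      by (rule sum_lessThan_telescope)
    then have E: "(\<Sum>j<n. q (a + (real j + 1) * w)) = (\<Sum>j<n. q (a + real j * w)) + (q (a + real n * w) - q a)"
      by (simp add: sum_subtractf add.commute)
    have "(\<Sum>j<n. q (a + (real j + 1) * w) * w) = (\<Sum>j<n. q (a + (real j + 1) * w)) * w"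
      by (simp add: sum_distrib_right)
    then show ?thesis unfolding E by (simp add: mult.commute)
  qed
  also have "\<dots> \<le> w * (\<Sum>j<n. q (a + real j * w)) + 2 * C * w"
  proof -
    have "q (a + real n * w) - q a \<le> 2 * C" using qb[of "a + real n * w"] qb[of a] by linarith
    then show ?thesis using w by (simp add: distrib_left)
  qed
  finally show ?thesis .
qed

lemma avg_step_arith:
  fixes z T :: real and m :: nat
  shows "(z + T) / real (Suc (Suc m)) = 1 / real (Suc (Suc m)) * z + (1 - 1 / real (Suc (Suc m))) * (T / real (Suc m))"
proof -
  have p: "real (Suc (Suc m)) = real m + 2" "real (Suc m) = real m + 1" by auto
  define x where "x = real m"
  have x: "0 \<le> x" by (simp add: x_def)
  have h1: "1 - 1 / (x + 2) = (x + 1) / (x + 2)" using x by (simp add: field_simps)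
  have nz: "x + 1 \<noteq> 0" "x + 2 \<noteq> 0" using x by auto
  have h2: "(x + 1) / (x + 2) * (T / (x + 1)) = T / (x + 2)" using nz by simp
  show ?thesis unfolding p x_def[symmetric] h1 h2 by (simp add: add_divide_distrib)
qed

lemma qc_avg:
  assumes qc: "quasi_convex M \<rho>"
    and Z: "\<And>k. k < Suc m \<Longrightarrow> Z k \<in> Linf M \<and> \<rho> (Z k) \<le> r"
  shows "(\<lambda>\<omega>. (\<Sum>k<Suc m. Z k \<omega>) / real (Suc m)) \<in> Linf M \<and> \<rho> (\<lambda>\<omega>. (\<Sum>k<Suc m. Z k \<omega>) / real (Suc m)) \<le> r"
  using Z
proof (induction m)
  case 0
  have "(\<lambda>\<omega>. (\<Sum>k<Suc 0. Z k \<omega>) / real (Suc 0)) = Z 0" by auto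
  then show ?case using 0[of 0] by simp
next
  case (Suc m)
  define S where "S = (\<lambda>\<omega>. (\<Sum>k<Suc m. Z k \<omega>) / real (Suc m))"
  have IH: "S \<in> Linf M \<and> \<rho> S \<le> r" unfolding S_def using Suc.IH Suc.prems by auto
  define \<gamma> where "\<gamma> = 1 / real (Suc (Suc m))"
  have g: "0 \<le> \<gamma>" "\<gamma> \<le> 1" by (auto simp: \<gamma>_def)
  have eq: "(\<lambda>\<omega>. (\<Sum>k<Suc (Suc m). Z k \<omega>) / real (Suc (Suc m))) = (\<lambda>\<omega>. \<gamma> * Z (Suc m) \<omega> + (1 - \<gamma>) * S \<omega>)"
  proof
    fix \<omega>
    have "(\<Sum>k<Suc (Suc m). Z k \<omega>) = Z (Suc m) \<omega> + (\<Sum>k<Suc m. Z k \<omega>)" by simp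
    then show "(\<Sum>k<Suc (Suc m). Z k \<omega>) / real (Suc (Suc m)) = \<gamma> * Z (Suc m) \<omega> + (1 - \<gamma>) * S \<omega>"
      unfolding \<gamma>_def S_def using avg_step_arith[of "Z (Suc m) \<omega>" "\<Sum>k<Suc m. Z k \<omega>" m]
      by (simp only:)
  qed
  have Zs: "Z (Suc m) \<in> Linf M" "\<rho> (Z (Suc m)) \<le> r" using Suc.prems[of "Suc m"] by auto
  have "\<rho> (\<lambda>\<omega>. \<gamma> * Z (Suc m) \<omega> + (1 - \<gamma>) * S \<omega>) \<le> max (\<rho> (Z (Suc m))) (\<rho> S)"
    using qc Zs IH g unfolding quasi_convex_def by blast
  also have "\<dots> \<le> r" using Zs IH by simp
  finally show ?case unfolding eq using Linf_comb[OF Zs(1) _ g] IH by simp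
qed

lemma ereal_eps_helper:
  assumes "\<And>n::nat. 0 < n \<Longrightarrow> ereal (E - D / real n) \<le> y" "0 \<le> D"
  shows "ereal E \<le> y"
proof (rule ereal_le_epsilon2)
  fix e :: real assume e: "0 < e"
  obtain n :: nat where n: "D / e < real n" using reals_Archimedean2 by blast
  have n0: "0 < n" using n e assms(2) by (metis divide_nonneg_pos not_gr_zero of_nat_0 not_le)
  have "D / real n < e" using n e n0 by (simp add: field_simps)
  have le: "ereal (E - D / real n) \<le> y" using assms(1)[OF n0] .
  show "ereal E \<le> y + ereal e"
  proof (cases y)
    case (real r)
    then show ?thesis using le \<open>D / real n < e\<close> by simp
  next
    case PInf then show ?thesis by simp
  next
    case MInf then show ?thesis using le by simp
  qed
qed

lemma core_lower:
  assumes P: "prob_space M" and atl: "atomless M" and XL: "X \<in> Linf M"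
    and qc: "quasi_convex M \<rho>" and li: "law_invariant M \<rho>"
    and hyp: "\<forall>Y\<in>Linf M. VaR_plus M a Y \<le> \<rho> Y" and a: "0 \<le> a" "a < 1"
  shows "ES M a X \<le> \<rho> X"
proof -
  interpret atl_prob M using P atl by (simp add: atl_prob_def atl_prob_axioms_def)
  obtain C where X: "X \<in> borel_measurable M" "0 \<le> C" "AE \<omega> in M. \<bar>X \<omega>\<bar> \<le> C"
    using LinfD[OF XL] by blast
  note Qb = Q_bound[OF P X(1,3,2)]
  define qq where "qq = (\<lambda>\<beta>. if \<beta> \<le> 0 then - C else if 1 \<le> \<beta> then C else Q M X \<beta>)"
  have qqb: "\<bar>qq \<beta>\<bar> \<le> C" for \<beta> using Qb[of \<beta>] X(2) by (auto simp: qq_def)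
  have qqmono: "mono qq"
  proof (rule monoI)
    fix x y :: real assume "x \<le> y"
    then show "qq x \<le> qq y"
      using Qb[of x] Qb[of y] Q_mono[OF P X(1), of x y] by (auto simp: qq_def abs_le_iff)
  qed
  have qqm: "qq \<in> borel_measurable borel" using qqmono by (rule borel_measurable_mono)
  have distr_qq: "distr Lam borel qq = distr M borel X"
  proof -
    have "distr Lam borel qq = distr Lam borel (Q M X)"
      by (rule distr_cong) (auto simp: space_Lam qq_def)
    then show ?thesis using distr_Q[OF P X(1)] by simp
  qed
  define A where "A = integral\<^sup>L Lam (\<lambda>\<beta>. indicator {a<..<1} \<beta> * qq \<beta>)"
  have A_eq: "A = integral\<^sup>L Lam (\<lambda>\<beta>. indicator {a<..<1} \<beta> * Q M X \<beta>)"
    unfolding A_def by (rule Bochner_Integration.integral_cong) (auto simp: space_Lam qq_def)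
  have ES_A: "ES M a X = ereal (A / (1 - a))"
    using ES_eq[OF P X(1) a] A_eq by simp
  have idm: "(\<lambda>x. x) \<in> borel_measurable Lam" unfolding Lam_def by (intro measurable_restrict_space1) simp
  have rotL: "rot a s \<in> borel_measurable Lam" for s unfolding Lam_def
    using rot_measurable by (intro measurable_restrict_space1) simp
  have step: "ereal (A / (1 - a) - 2 * C / real n) \<le> \<rho> X" if n: "0 < n" for n :: nat
  proof -
    define w where "w = (1 - a) / real n"
    have w: "0 < w" "real n * w = 1 - a" using a n by (auto simp: w_def)
    define Y where "Y = (\<lambda>k::nat. \<lambda>\<omega>. qq (rot a (real k * w) (V \<omega>)))"
    have Ym: "Y k \<in> borel_measurable M" for k
      unfolding Y_def using qqm rot_measurable V_measurable by measurable
    have YL: "Y k \<in> Linf M" for k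
      using Ym qqb by (auto simp: Linf_def Y_def intro!: exI[of _ C])
    have Ydistr: "distr M borel (Y k) = distr M borel X" if k: "k < n" for k
    proof -
      have s: "0 \<le> real k * w" "real k * w < 1 - a"
      proof -
        show "0 \<le> real k * w" using w by simp
        have "real k * w < real n * w" using k w by (intro mult_strict_right_mono) auto
        then show "real k * w < 1 - a" using w by simp
      qed
      have "distr M borel (Y k) = distr M borel ((qq \<circ> rot a (real k * w)) \<circ> V)"
        by (simp add: Y_def comp_def)
      also have "\<dots> = distr (distr M borel V) borel (qq \<circ> rot a (real k * w))"
        using qqm rot_measurable V_measurable by (subst distr_distr) auto
      also have "\<dots> = distr (distr Lam borel (\<lambda>x. x)) borel (qq \<circ> rot a (real k * w))"
        by (simp add: distr_V)
      also have "\<dots> = distr Lam borel (qq \<circ> rot a (real k * w))"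
        using qqm rot_measurable idm by (subst distr_distr) (auto simp: comp_def)
      also have "\<dots> = distr (distr Lam borel (rot a (real k * w))) borel qq"
        using qqm rotL by (subst distr_distr) auto
      also have "\<dots> = distr (distr Lam borel (\<lambda>x. x)) borel qq"
        using rot_preserves[OF a s] by simp
      also have "\<dots> = distr Lam borel qq"
        using qqm idm by (subst distr_distr) (auto simp: comp_def)
      finally show ?thesis using distr_qq by simp
    qed
    have rhoY: "\<rho> (Y k) \<le> \<rho> X" if "k < n" for k
    proof -
      have "\<rho> (Y k) = \<rho> X"
        by (rule li[unfolded law_invariant_def, rule_format, OF YL XL Ydistr[OF that]])
      then show ?thesis by simp
    qed
    obtain m where m: "n = Suc m" using n by (cases n) auto
    define Yavg where "Yavg = (\<lambda>\<omega>. (\<Sum>k<n. Y k \<omega>) / real n)"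
    have avg: "Yavg \<in> Linf M \<and> \<rho> Yavg \<le> \<rho> X"
      unfolding Yavg_def m by (rule qc_avg[OF qc]) (use YL rhoY m in auto)
    define L where "L = (\<Sum>j<n. qq (a + real j * w)) / real n"
    have VaRL: "ereal L \<le> VaR_plus M a Yavg"
      unfolding VaR_plus_def
    proof (rule Inf_greatest, clarify)
      fix x assume x: "a < measure M {\<omega> \<in> space M. Yavg \<omega> \<le> x}"
      show "ereal L \<le> ereal x"
      proof (rule ccontr)
        assume "\<not> ereal L \<le> ereal x"
        then have xL: "x < L" by simp
        have sub: "{\<omega> \<in> space M. Yavg \<omega> \<le> x} \<subseteq> {\<omega> \<in> space M. V \<omega> \<le> a}"
        proof safe
          fix \<omega> assume \<omega>: "\<omega> \<in> space M" "Yavg \<omega> \<le> x"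
          show "V \<omega> \<le> a"
          proof (rule ccontr)
            assume "\<not> V \<omega> \<le> a"
            then have "a < V \<omega>" "V \<omega> \<le> 1" using V_01 by auto
            then have "(\<Sum>j<n. qq (a + real j * w)) \<le> (\<Sum>k<n. Y k \<omega>)"
              using rot_pointwise[OF qqmono a n, of "V \<omega>"] by (simp add: Y_def w_def)
            then have "L \<le> Yavg \<omega>" unfolding L_def Yavg_def using n by (simp add: divide_right_mono)
            then show False using \<omega> xL by simp
          qed
        qed
        have "{\<omega> \<in> space M. V \<omega> \<le> a} \<in> sets M" using V_measurable by measurable
        then have "measure M {\<omega> \<in> space M. Yavg \<omega> \<le> x} \<le> measure M {\<omega> \<in> space M. V \<omega> \<le> a}"
          using sub by (intro finite_measure_mono) auto
        also have "\<dots> = a" using V_cdf[of a] a by simp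
        finally show False using x by simp
      qed
    qed
    have RB: "A \<le> w * (\<Sum>j<n. qq (a + real j * w)) + 2 * C * w"
      unfolding A_def w_def using riemann_bound[OF qqmono qqb a n] by simp
    have "A / (1 - a) - 2 * C / real n \<le> L"
    proof -
      have nz: "real n \<noteq> 0" using n by simp
      have "w * (\<Sum>j<n. qq (a + real j * w)) = (1 - a) * L"
        unfolding L_def w(2)[symmetric] using nz by simp
      moreover have "2 * C * w = (1 - a) * (2 * C / real n)" unfolding w_def by simp
      ultimately have "A \<le> (1 - a) * (L + 2 * C / real n)" using RB by (simp add: algebra_simps)
      then have "A / (1 - a) \<le> L + 2 * C / real n" using a by (simp add: pos_divide_le_eq mult.commute)
      then show ?thesis by simp
    qed
    then have "ereal (A / (1 - a) - 2 * C / real n) \<le> ereal L" by simp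
    also have "\<dots> \<le> VaR_plus M a Yavg" by (rule VaRL)
    also have "\<dots> \<le> \<rho> Yavg" using hyp avg by auto
    also have "\<dots> \<le> \<rho> X" using avg by auto
    finally show ?thesis .
  qed
  have "ereal (A / (1 - a)) \<le> \<rho> X"
    by (rule ereal_eps_helper[where D="2 * C"]) (use step X(2) in auto)
  then show ?thesis using ES_A by simp
qed

lemma VaR_plus_le_VaR:
  assumes "b < \<alpha>"
  shows "VaR_plus M b X \<le> VaR M \<alpha> X"
  unfolding VaR_def VaR_plus_def by (rule Inf_superset_mono) (use assms in auto)

lemma lower_i:
  assumes P: "prob_space M" and atl: "atomless M" and XL: "X \<in> Linf M"
    and qc: "quasi_convex M \<rho>" and li: "law_invariant M \<rho>"
    and hyp: "\<forall>Y\<in>Linf M. VaR M \<alpha> Y \<le> \<rho> Y" and al: "0 < \<alpha>" "\<alpha> < 1"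
  shows "ES M \<alpha> X \<le> \<rho> X"
proof -
  obtain C where X: "X \<in> borel_measurable M" "0 \<le> C" "AE \<omega> in M. \<bar>X \<omega>\<bar> \<le> C"
    using LinfD[OF XL] by blast
  note Qb = Q_bound[OF P X(1,3,2)]
  have Qm: "Q M X \<in> borel_measurable borel" by (rule Q_measurable[OF P X(1)])
  define A where "A b = integral\<^sup>L Lam (\<lambda>\<beta>. indicator {b<..<1} \<beta> * Q M X \<beta>)" for b
  have intQ: "integrable Lam (\<lambda>\<beta>. indicator {b<..<1} \<beta> * Q M X \<beta>)" for b
    by (rule integrable_Lam[where B=C]) (use Qm Qb X(2) in \<open>auto simp: indicator_def\<close>)
  have ESb: "ES M b X = ereal (A b / (1 - b))" if "0 \<le> b" "b < 1" for b
    using ES_eq[OF P X(1) that] by (simp add: A_def)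
  have lowb: "ereal ((A \<alpha> - C * (\<alpha> - b)) / (1 - b)) \<le> \<rho> X" if b: "0 \<le> b" "b < \<alpha>" for b
  proof -
    have h: "\<forall>Y\<in>Linf M. VaR_plus M b Y \<le> \<rho> Y"
      using hyp VaR_plus_le_VaR[OF b(2)] by (meson order.trans)
    have "ES M b X \<le> \<rho> X" by (rule core_lower[OF P atl XL qc li h]) (use b al in auto)
    then have r: "ereal (A b / (1 - b)) \<le> \<rho> X" using ESb[of b] b al by simp
    have iC: "integrable Lam (\<lambda>\<beta>. indicator {b<..\<alpha>} \<beta> * C)"
      by (rule integrable_Lam[where B=C]) (use X(2) in \<open>auto simp: indicator_def\<close>)
    have e1: "integral\<^sup>L Lam (\<lambda>\<beta>. indicator {b<..\<alpha>} \<beta> * C) = C * (\<alpha> - b)"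
      using integral_Lam_ind_Ioc[of b \<alpha> C] b al by simp
    have "A \<alpha> - C * (\<alpha> - b) = integral\<^sup>L Lam (\<lambda>\<beta>. indicator {\<alpha><..<1} \<beta> * Q M X \<beta>) -
        integral\<^sup>L Lam (\<lambda>\<beta>. indicator {b<..\<alpha>} \<beta> * C)"
      unfolding A_def e1 by (rule refl)
    also have "\<dots> = integral\<^sup>L Lam (\<lambda>\<beta>. indicator {\<alpha><..<1} \<beta> * Q M X \<beta> - indicator {b<..\<alpha>} \<beta> * C)"
      by (rule Bochner_Integration.integral_diff[OF intQ iC, symmetric])
    also have "\<dots> \<le> A b" unfolding A_def
    proof (rule integral_mono)
      show "integrable Lam (\<lambda>\<beta>. indicator {\<alpha><..<1} \<beta> * Q M X \<beta> - indicator {b<..\<alpha>} \<beta> * C)"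
        using intQ[of \<alpha>] iC by auto
      fix \<beta>
      show "indicator {\<alpha><..<1} \<beta> * Q M X \<beta> - indicator {b<..\<alpha>} \<beta> * C \<le> indicator {b<..<1} \<beta> * Q M X \<beta>"
        using Qb[of \<beta>] b al X(2) by (auto simp: indicator_def abs_le_iff)
    qed (rule intQ)
    finally have "(A \<alpha> - C * (\<alpha> - b)) / (1 - b) \<le> A b / (1 - b)"
      using b al by (intro divide_right_mono) auto
    then show ?thesis using r by (meson ereal_less_eq(3) order.trans)
  qed
  have lim: "((\<lambda>b. (A \<alpha> - C * (\<alpha> - b)) / (1 - b)) \<longlongrightarrow> A \<alpha> / (1 - \<alpha>)) (at_left \<alpha>)"
  proof -
    have "((\<lambda>b. (A \<alpha> - C * (\<alpha> - b)) / (1 - b)) \<longlongrightarrow> (A \<alpha> - C * (\<alpha> - \<alpha>)) / (1 - \<alpha>)) (at \<alpha>)"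
      using al by (intro tendsto_intros) auto
    then have "((\<lambda>b. (A \<alpha> - C * (\<alpha> - b)) / (1 - b)) \<longlongrightarrow> A \<alpha> / (1 - \<alpha>)) (at \<alpha>)" by simp
    then show ?thesis by (rule tendsto_mono[OF at_within_le_at])
  qed
  have "ereal (A \<alpha> / (1 - \<alpha>)) \<le> \<rho> X"
  proof (rule ereal_le_epsilon2)
    fix e :: real assume e: "0 < e"
    have ev: "\<forall>\<^sub>F b in at_left \<alpha>. A \<alpha> / (1 - \<alpha>) - e < (A \<alpha> - C * (\<alpha> - b)) / (1 - b) \<and> b \<in> {0<..<\<alpha>}"
      using order_tendstoD(1)[OF lim, of "A \<alpha> / (1 - \<alpha>) - e"] e eventually_at_left_real[OF al(1)]
      by (auto intro: eventually_conj)
    obtain b where b: "A \<alpha> / (1 - \<alpha>) - e < (A \<alpha> - C * (\<alpha> - b)) / (1 - b)" "0 < b" "b < \<alpha>"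
      using eventually_happens'[OF trivial_limit_at_left_real ev] by auto
    have le: "ereal (A \<alpha> / (1 - \<alpha>) - e) \<le> \<rho> X"
      using lowb[of b] b by (meson ereal_less_eq(3) less_imp_le order.trans)
    show "ereal (A \<alpha> / (1 - \<alpha>)) \<le> \<rho> X + ereal e"
    proof (cases "\<rho> X")
      case (real r) then show ?thesis using le by simp
    next
      case PInf then show ?thesis by simp
    next
      case MInf then show ?thesis using le by simp
    qed
  qed
  then show ?thesis using ESb[of \<alpha>] al by simp
qed

theorem theorem1:
  fixes M :: "'a measure"
  assumes "prob_space M" and "atomless M"
  shows
    "(\<forall>\<alpha>::real. 0 < \<alpha> \<and> \<alpha> \<le> 1 \<longrightarrow>
        quasi_convex M (ES M \<alpha>) \<and> law_invariant M (ES M \<alpha>) \<and>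
        (\<forall>X\<in>Linf M. ES M \<alpha> X \<ge> VaR M \<alpha> X) \<and>
        (\<forall>\<rho> :: ('a \<Rightarrow> real) \<Rightarrow> ereal.
           quasi_convex M \<rho> \<and> law_invariant M \<rho> \<and> (\<forall>X\<in>Linf M. \<rho> X \<ge> VaR M \<alpha> X)
           \<longrightarrow> (\<forall>X\<in>Linf M. \<rho> X \<ge> ES M \<alpha> X)))
   \<and>
    (\<forall>\<alpha>::real. 0 \<le> \<alpha> \<and> \<alpha> < 1 \<longrightarrow>
        quasi_convex M (ES M \<alpha>) \<and> law_invariant M (ES M \<alpha>) \<and>
        (\<forall>X\<in>Linf M. ES M \<alpha> X \<ge> VaR_plus M \<alpha> X) \<and>
        (\<forall>\<rho> :: ('a \<Rightarrow> real) \<Rightarrow> ereal.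
           quasi_convex M \<rho> \<and> law_invariant M \<rho> \<and> (\<forall>X\<in>Linf M. \<rho> X \<ge> VaR_plus M \<alpha> X)
           \<longrightarrow> (\<forall>X\<in>Linf M. \<rho> X \<ge> ES M \<alpha> X)))"
proof (intro conjI allI impI)
  fix \<alpha> :: real assume al: "0 < \<alpha> \<and> \<alpha> \<le> 1"
  show "quasi_convex M (ES M \<alpha>)"
  proof (cases "\<alpha> < 1")
    case True then show ?thesis using ES_quasi_convex_lt1[OF assms(1)] al by auto
  next
    case False then have "\<alpha> = 1" using al by auto
    then show ?thesis using ES1_quasi_convex[OF assms(1)] by simp
  qed
  show "law_invariant M (ES M \<alpha>)" by (rule ES_law_invariant)
  show "\<forall>X\<in>Linf M. VaR M \<alpha> X \<le> ES M \<alpha> X"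
  proof
    fix X assume X: "X \<in> Linf M"
    show "VaR M \<alpha> X \<le> ES M \<alpha> X"
    proof (cases "\<alpha> < 1")
      case True
      then show ?thesis using VaR_le_VaR_plus[of M \<alpha> X] ES_ge_VaR_plus[OF assms(1) X, of \<alpha>] al
        by (meson less_imp_le order.trans)
    next
      case False then have "\<alpha> = 1" using al by auto
      then show ?thesis by (simp add: ES_def)
    qed
  qed
  show "\<forall>X\<in>Linf M. ES M \<alpha> X \<le> \<rho> X"
    if H: "quasi_convex M \<rho> \<and> law_invariant M \<rho> \<and> (\<forall>X\<in>Linf M. VaR M \<alpha> X \<le> \<rho> X)" for \<rho>
  proof
    fix X assume X: "X \<in> Linf M"
    show "ES M \<alpha> X \<le> \<rho> X"
    proof (cases "\<alpha> < 1")
      case True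
      then show ?thesis using lower_i[OF assms X, of \<rho> \<alpha>] H al by auto
    next
      case False then have "\<alpha> = 1" using al by auto
      then show ?thesis using H X by (simp add: ES_def)
    qed
  qed
next
  fix \<alpha> :: real assume al: "0 \<le> \<alpha> \<and> \<alpha> < 1"
  show "quasi_convex M (ES M \<alpha>)" using ES_quasi_convex_lt1[OF assms(1)] al by auto
  show "law_invariant M (ES M \<alpha>)" by (rule ES_law_invariant)
  show "\<forall>X\<in>Linf M. VaR_plus M \<alpha> X \<le> ES M \<alpha> X"
    using ES_ge_VaR_plus[OF assms(1)] al by auto
  show "\<forall>X\<in>Linf M. ES M \<alpha> X \<le> \<rho> X"
    if H: "quasi_convex M \<rho> \<and> law_invariant M \<rho> \<and> (\<forall>X\<in>Linf M. VaR_plus M \<alpha> X \<le> \<rho> X)" for \<rho>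
  proof
    fix X assume X: "X \<in> Linf M"
    show "ES M \<alpha> X \<le> \<rho> X"
      using core_lower[OF assms X, of \<rho> \<alpha>] H al by auto
  qed
qed

end
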